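(* Let $I$ be a finite set, $T$ a tree on $I$, and fix a nice total order on $\mathcal{V}(T)$ with associated edge-labeling $\lambda$. For each $F \in [\hat{0},T]\setminus\{T\}$ there exists a unique $G\in[\hat{0},T]$ covering $F$ such that $\lambda(F,G) = \min(\mathcal{V}(T)\setminus\mathcal{V}(F))$.
   Context: A tree on a finite set $I$ is a (non-planar) rooted binary tree whose leaves are bijectively labeled by $I$: vertices are inner vertices (valence $3$) and leaves and the root (valence $1$), edges oriented towards the root; one-leaf trees are allowed. A forest on $I$ is a set of trees whose leaf sets partition $I$; $\mathcal{V}(F)$ is its set of inner vertices. For forests $F,G$ on $I$, $F \leq G$ if there is a continuous map $F\to G$ which (D1) is increasing with respect to orientation towards the root, (D2) maps inner vertices to inner vertices injectively, (D3) is the identity of $I$ on leaves, (D4) is injective on each tree of $F$. This gives the poset $\operatorname{For}(I)$, graded by the number of inner vertices, with minimum $\hat{0}$ (no inner vertices). For $F \leq G \leq T$ the inner vertices are regarded, via these maps, as subsets $\mathcal{V}(F)\subseteq\mathcal{V}(G)\subseteq\mathcal{V}(T)$; if $G$ covers $F$ there is a unique $v$ with $\mathcal{V}(G)=\mathcal{V}(F)\cup\{v\}$. Partial order on $\mathcal{V}(T)$: $v \preceq v'$ if $v'$ lies on the path between the root and $v$. A nice total order is any total order on $\mathcal{V}(T)$ extending $\preceq$; using it, the inner vertices are labeled $1,\dots,n$ increasingly and identified with their labels (min is taken in this order). The edge-labeling $\lambda$ is defined for $F\lhd G$ in $[\hat{0},T]$ by $\mathcal{V}(G)=\mathcal{V}(F)\cup\{\lambda(F,G)\}$.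 *)

theory Defs
  imports Main
begin

text \<open>
A (non-planar, rooted, binary) forest on a finite leaf set I is represented,
up to isomorphism fixing the leaves, by its set of clusters: every vertex (leaf or inner
vertex) is represented by the set of leaves below it. Leaves are the singletons {i},
inner vertices are the clusters of cardinality at least 2; the clusters form a laminar
family of nonempty subsets of I containing all singletons, and every inner cluster is
the disjoint union of two clusters (its two children). Trees of the forest correspond
to the maximal clusters. (Root vertices of valence 1 are not represented explicitly;
each tree has exactly one, directly above its maximal cluster.)
\<close>

definition children :: "'a set \<Rightarrow> 'a set \<Rightarrow> 'a set \<Rightarrow> bool" where
  "children C C1 C2 \<longleftrightarrow> C1 \<noteq> {} \<and> C2 \<noteq> {} \<and> C1 \<inter> C2 = {} \<and> C1 \<union> C2 = C"

definition forest :: "'a set \<Rightarrow> 'a set set \<Rightarrow> bool" where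
  "forest I F \<longleftrightarrow> finite I
     \<and> (\<forall>C\<in>F. C \<noteq> {} \<and> C \<subseteq> I)
     \<and> (\<forall>i\<in>I. {i} \<in> F)
     \<and> (\<forall>C\<in>F. \<forall>D\<in>F. C \<subseteq> D \<or> D \<subseteq> C \<or> C \<inter> D = {})
     \<and> (\<forall>C\<in>F. card C \<ge> 2 \<longrightarrow> (\<exists>C1\<in>F. \<exists>C2\<in>F. children C C1 C2))"

text \<open>A tree on I: a forest with a single tree, i.e. I itself is a cluster (the top inner
vertex, or the unique leaf if I is a singleton).\<close>
definition tree :: "'a set \<Rightarrow> 'a set set \<Rightarrow> bool" where
  "tree I T \<longleftrightarrow> forest I T \<and> I \<in> T"

definition inner :: "'a set set \<Rightarrow> 'a set set" where
  "inner F = {C \<in> F. card C \<ge> 2}"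

text \<open>Combinatorial form of a continuous map F \<rightarrow> G satisfying (D1)-(D4), recorded on
vertices: phi sends each vertex of F to a vertex of G, each edge C' \<rightarrow> C of F goes to the
upward path from phi C' to phi C in G.
 (D3) leaves are fixed;
 (D2) inner vertices go to inner vertices, injectively;
 (D1) the map is increasing towards the root;
 (D4) injectivity on each tree: the images of the two edges below an inner vertex C
      are nondegenerate upward paths that meet only at phi C, i.e. phi C1 and phi C2 lie
      in different child branches of phi C (no proper subcluster of phi C contains both).\<close>
definition forest_map :: "'a set \<Rightarrow> 'a set set \<Rightarrow> 'a set set \<Rightarrow> ('a set \<Rightarrow> 'a set) \<Rightarrow> bool" where
  "forest_map I F G phi \<longleftrightarrow>
     (\<forall>C\<in>F. phi C \<in> G)
   \<and> (\<forall>i\<in>I. phi {i} = {i})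
   \<and> (\<forall>C\<in>inner F. phi C \<in> inner G) \<and> inj_on phi (inner F)
   \<and> (\<forall>C\<in>F. \<forall>D\<in>F. C \<subseteq> D \<longrightarrow> phi C \<subseteq> phi D)
   \<and> (\<forall>C\<in>F. \<forall>C1\<in>F. \<forall>C2\<in>F. children C C1 C2 \<longrightarrow>
        phi C1 \<subset> phi C \<and> phi C2 \<subset> phi C \<and>
        \<not> (\<exists>K\<in>G. K \<subset> phi C \<and> phi C1 \<union> phi C2 \<subseteq> K))"

definition forest_le :: "'a set \<Rightarrow> 'a set set \<Rightarrow> 'a set set \<Rightarrow> bool" where
  "forest_le I F G \<longleftrightarrow> forest I F \<and> forest I G \<and> (\<exists>phi. forest_map I F G phi)"

definition covers :: "'a set \<Rightarrow> 'a set set \<Rightarrow> 'a set set \<Rightarrow> bool" where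
  "covers I F G \<longleftrightarrow> forest_le I F G \<and> F \<noteq> G \<and>
     \<not> (\<exists>H. forest_le I F H \<and> forest_le I H G \<and> H \<noteq> F \<and> H \<noteq> G)"

definition bot_forest :: "'a set \<Rightarrow> 'a set set" where
  "bot_forest I = {{i} | i. i \<in> I}"

definition interval :: "'a set \<Rightarrow> 'a set set \<Rightarrow> 'a set set set" where
  "interval I T = {F. forest_le I (bot_forest I) F \<and> forest_le I F T}"

text \<open>Inner vertices of F \<le> T regarded as a subset of V(T) via the map F \<rightarrow> T
(this map is unique on inner vertices).\<close>
definition vT :: "'a set \<Rightarrow> 'a set set \<Rightarrow> 'a set set \<Rightarrow> 'a set set" where
  "vT I T F = (SOME phi. forest_map I F T phi) ` inner F"

text \<open>Nice total order: inner vertices labelled 1..n bijectively, increasing along the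
partial order v \<preceq> v' (v' on the path from v to the root, i.e. v \<subseteq> v').\<close>
definition nice_order :: "'a set set \<Rightarrow> ('a set \<Rightarrow> nat) \<Rightarrow> bool" where
  "nice_order T lab \<longleftrightarrow> bij_betw lab (inner T) {1..card (inner T)} \<and>
     (\<forall>v\<in>inner T. \<forall>w\<in>inner T. v \<subseteq> w \<longrightarrow> lab v \<le> lab w)"

definition min_vertex :: "('a set \<Rightarrow> nat) \<Rightarrow> 'a set set \<Rightarrow> 'a set" where
  "min_vertex lab S = (THE v. v \<in> S \<and> (\<forall>w\<in>S. lab v \<le> lab w))"

definition edge_label :: "'a set \<Rightarrow> 'a set set \<Rightarrow> 'a set set \<Rightarrow> 'a set set \<Rightarrow> 'a set" where
  "edge_label I T F G = (THE v. v \<notin> vT I T F \<and> vT I T G = insert v (vT I T F))"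

end

theory Submission
  imports Defs
begin

definition lca :: "'a set set \<Rightarrow> 'a set \<Rightarrow> 'a set" where
  "lca A C = \<Inter>{D \<in> A. C \<subseteq> D}"

definition roots :: "'a set set \<Rightarrow> 'a set set" where
  "roots F = {R \<in> F. \<forall>D\<in>F. R \<subseteq> D \<longrightarrow> D = R}"

definition Phi :: "'a set set \<Rightarrow> 'a set set \<Rightarrow> 'a set set" where
  "Phi A Q = {w \<inter> q | w q. w \<in> A \<and> q \<in> Q \<and> w \<inter> q \<noteq> {}}"

definition mrg :: "'a set set \<Rightarrow> 'a set \<Rightarrow> 'a set \<Rightarrow> 'a set set" where
  "mrg P X Y = insert (X \<union> Y) (P - {X, Y})"

definition partn :: "'a set \<Rightarrow> 'a set set \<Rightarrow> bool" where
  "partn I P \<longleftrightarrow> (\<forall>p\<in>P. p \<noteq> {}) \<and> \<Union>P = I \<and> (\<forall>p\<in>P. \<forall>q\<in>P. p \<inter> q \<noteq> {} \<longrightarrow> p = q)"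

lemma forestD:
  assumes "forest I F"
  shows "finite I" "\<And>C. C \<in> F \<Longrightarrow> C \<noteq> {}" "\<And>C. C \<in> F \<Longrightarrow> C \<subseteq> I"
    "\<And>i. i \<in> I \<Longrightarrow> {i} \<in> F"
    "\<And>C D. C \<in> F \<Longrightarrow> D \<in> F \<Longrightarrow> C \<subseteq> D \<or> D \<subseteq> C \<or> C \<inter> D = {}"
    "\<And>C. C \<in> F \<Longrightarrow> card C \<ge> 2 \<Longrightarrow> \<exists>C1\<in>F. \<exists>C2\<in>F. children C C1 C2"
proof -
  have f: "finite I \<and> (\<forall>C\<in>F. C \<noteq> {} \<and> C \<subseteq> I) \<and> (\<forall>i\<in>I. {i} \<in> F)
     \<and> (\<forall>C\<in>F. \<forall>D\<in>F. C \<subseteq> D \<or> D \<subseteq> C \<or> C \<inter> D = {})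
     \<and> (\<forall>C\<in>F. card C \<ge> 2 \<longrightarrow> (\<exists>C1\<in>F. \<exists>C2\<in>F. children C C1 C2))"
    using assms unfolding forest_def .
  show "finite I" using f by simp
  show "\<And>C. C \<in> F \<Longrightarrow> C \<noteq> {}" using f by simp
  show "\<And>C. C \<in> F \<Longrightarrow> C \<subseteq> I" using f by simp
  show "\<And>i. i \<in> I \<Longrightarrow> {i} \<in> F" using f by simp
  show "\<And>C D. C \<in> F \<Longrightarrow> D \<in> F \<Longrightarrow> C \<subseteq> D \<or> D \<subseteq> C \<or> C \<inter> D = {}" using f by simp
  show "\<And>C. C \<in> F \<Longrightarrow> card C \<ge> 2 \<Longrightarrow> \<exists>C1\<in>F. \<exists>C2\<in>F. children C C1 C2" using f by simp
qed

lemma forest_fin: "forest I F \<Longrightarrow> C \<in> F \<Longrightarrow> finite C"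
  using forestD(1,3) finite_subset by metis

lemma forest_finite: "forest I F \<Longrightarrow> finite F"
proof -
  assume a: "forest I F"
  then have "F \<subseteq> Pow I" using forestD(3) by blast
  then show ?thesis by (rule finite_subset) (simp add: forestD(1)[OF a])
qed

lemma forest_small:
  assumes "forest I F" "C \<in> F" "\<not> card C \<ge> 2"
  shows "\<exists>i\<in>I. C = {i}"
proof -
  have "finite C" using forest_fin[OF assms(1,2)] .
  have "C \<noteq> {}" using forestD(2)[OF assms(1,2)] .
  then have "card C \<noteq> 0" using \<open>finite C\<close> by simp
  then have "card C = 1" using assms(3) by linarith
  then obtain i where "C = {i}" using card_1_singletonE by blast
  then show ?thesis using forestD(3)[OF assms(1,2)] by auto
qed

lemma card2_inner: "finite X \<Longrightarrow> a \<in> X \<Longrightarrow> b \<in> X \<Longrightarrow> a \<noteq> b \<Longrightarrow> card X \<ge> 2"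
proof -
  assume "finite X" "a \<in> X" "b \<in> X" "a \<noteq> b"
  then have "{a,b} \<subseteq> X" by auto
  then have "card {a,b} \<le> card X" using \<open>finite X\<close> card_mono by blast
  then show ?thesis using \<open>a \<noteq> b\<close> by auto
qed

lemma children_sym: "children C C1 C2 \<Longrightarrow> children C C2 C1"
  unfolding children_def by blast

lemma child_sub:
  assumes "forest I A" "children w w1 w2" "w1 \<in> A" "w2 \<in> A" "u \<in> A" "u \<subseteq> w" "u \<noteq> w"
  shows "u \<subseteq> w1 \<or> u \<subseteq> w2"
proof -
  have l1: "u \<subseteq> w1 \<or> w1 \<subseteq> u \<or> u \<inter> w1 = {}" using forestD(5)[OF assms(1) assms(5) assms(3)] .
  have l2: "u \<subseteq> w2 \<or> w2 \<subseteq> u \<or> u \<inter> w2 = {}" using forestD(5)[OF assms(1) assms(5) assms(4)] .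
  have u: "u \<noteq> {}" using forestD(2)[OF assms(1) assms(5)] .
  have c: "w1 \<inter> w2 = {}" "w1 \<union> w2 = w" "w1 \<noteq> {}" "w2 \<noteq> {}" using assms(2) unfolding children_def by auto
  from l1 show ?thesis
  proof (elim disjE)
    assume "w1 \<subseteq> u"
    from l2 show ?thesis
    proof (elim disjE)
      assume "u \<subseteq> w2" then show ?thesis by simp
    next
      assume "w2 \<subseteq> u" then have "u = w" using \<open>w1 \<subseteq> u\<close> c assms(6) by auto
      then show ?thesis using assms(7) by simp
    next
      assume "u \<inter> w2 = {}" then show ?thesis using c assms(6) by auto
    qed
  next
    assume "u \<inter> w1 = {}" then show ?thesis using c assms(6) by auto
  qed simp
qed

lemma child_proper: "children w w1 w2 \<Longrightarrow> w1 \<subset> w \<and> w2 \<subset> w"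
  unfolding children_def by blast

lemma lca_lower: "D \<in> A \<Longrightarrow> C \<subseteq> D \<Longrightarrow> lca A C \<subseteq> D"
  unfolding lca_def by blast

lemma lca_upper: "C \<subseteq> lca A C"
  unfolding lca_def by blast

lemma lca_mono: "C \<subseteq> C' \<Longrightarrow> lca A C \<subseteq> lca A C'"
  unfolding lca_def by blast

lemma lca_self: "D \<in> A \<Longrightarrow> lca A D = D"
  unfolding lca_def by blast

lemma lca_in:
  assumes "forest I A" "C \<noteq> {}" "D \<in> A" "C \<subseteq> D"
  shows "lca A C \<in> A"
proof -
  have ex: "\<exists>x. (x \<in> A \<and> C \<subseteq> x) \<and> (\<forall>y. y \<in> A \<and> C \<subseteq> y \<longrightarrow> card x \<le> card y)"
    by (rule ex_has_least_nat[of "\<lambda>y. y \<in> A \<and> C \<subseteq> y" D card]) (simp add: assms(3,4))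
  then obtain D0 where D0: "D0 \<in> A" "C \<subseteq> D0" and mn: "\<And>y. y \<in> A \<Longrightarrow> C \<subseteq> y \<Longrightarrow> card D0 \<le> card y"
    by blast
  have fd: "finite D0" using forest_fin[OF assms(1) D0(1)] .
  have sub: "D0 \<subseteq> y" if y: "y \<in> A" "C \<subseteq> y" for y
  proof -
    have "D0 \<subseteq> y \<or> y \<subseteq> D0 \<or> D0 \<inter> y = {}" using forestD(5)[OF assms(1) D0(1) y(1)] .
    moreover have "y \<subseteq> D0 \<Longrightarrow> y = D0"
    proof -
      assume yd: "y \<subseteq> D0"
      have "card y \<le> card D0" using card_mono[OF fd yd] .
      moreover have "card D0 \<le> card y" using mn y by blast
      ultimately show "y = D0" using card_subset_eq[OF fd yd] by simp
    qed
    moreover have "D0 \<inter> y \<noteq> {}" using D0(2) y(2) assms(2) by blast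
    ultimately show ?thesis by blast
  qed
  have "lca A C = D0"
  proof
    show "lca A C \<subseteq> D0" using lca_lower[OF D0] .
    show "D0 \<subseteq> lca A C" unfolding lca_def using sub by blast
  qed
  then show ?thesis using D0 by simp
qed

lemma lca_split:
  assumes "forest I A" "u \<in> A" "children u u1 u2" "u1 \<in> A" "u2 \<in> A" "Z \<subseteq> u"
    "Z \<inter> u1 \<noteq> {}" "Z \<inter> u2 \<noteq> {}"
  shows "lca A Z = u"
proof (rule ccontr)
  assume ne: "lca A Z \<noteq> u"
  have Zne: "Z \<noteq> {}" using assms(7) by blast
  have li: "lca A Z \<in> A" using lca_in[OF assms(1) Zne assms(2,6)] .
  have "lca A Z \<subseteq> u" using lca_lower[OF assms(2,6)] .
  then have "lca A Z \<subseteq> u1 \<or> lca A Z \<subseteq> u2" using child_sub[OF assms(1,3,4,5) li] ne by blast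
  then show False using lca_upper[of Z A] assms(3,7,8) unfolding children_def by blast
qed

lemma lca_split_conv:
  assumes "children u u1 u2" "u1 \<in> A" "u2 \<in> A" "lca A Z = u"
  shows "Z \<inter> u1 \<noteq> {} \<and> Z \<inter> u2 \<noteq> {}"
proof -
  have Zu: "Z \<subseteq> u" using lca_upper[of Z A] assms(4) by simp
  show ?thesis
  proof (rule ccontr)
    assume "\<not> (Z \<inter> u1 \<noteq> {} \<and> Z \<inter> u2 \<noteq> {})"
    then have "Z \<subseteq> u2 \<or> Z \<subseteq> u1" using Zu assms(1) unfolding children_def by blast
    then have "u \<subseteq> u2 \<or> u \<subseteq> u1" using lca_lower[of _ A Z] assms(2,3,4) by blast
    then show False using assms(1) unfolding children_def by blast
  qed
qed

lemma branch:
  assumes "forest I A" "children w w1 w2" "w1 \<in> A" "w2 \<in> A" "a \<in> A" "b \<in> A"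
    "a \<subset> w" "b \<subset> w" "\<not> (\<exists>K\<in>A. K \<subset> w \<and> a \<union> b \<subseteq> K)"
  shows "(a \<subseteq> w1 \<and> b \<subseteq> w2) \<or> (a \<subseteq> w2 \<and> b \<subseteq> w1)"
proof -
  have ha: "a \<subseteq> w1 \<or> a \<subseteq> w2" using child_sub[OF assms(1-5)] assms(7) by blast
  have hb: "b \<subseteq> w1 \<or> b \<subseteq> w2" using child_sub[OF assms(1-4) assms(6)] assms(8) by blast
  have "w1 \<subset> w" "w2 \<subset> w" using child_proper[OF assms(2)] by auto
  then have n1: "\<not> (a \<subseteq> w1 \<and> b \<subseteq> w1)" and n2: "\<not> (a \<subseteq> w2 \<and> b \<subseteq> w2)"
    using assms(3,4,9) by blast+
  show ?thesis using ha hb n1 n2 by argo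
qed

lemma roots_exist:
  assumes "forest I F" "C \<in> F"
  shows "\<exists>R\<in>roots F. C \<subseteq> R"
proof -
  obtain R where R: "R \<in> F \<and> C \<subseteq> R" and mx: "\<forall>y. y \<in> F \<and> C \<subseteq> y \<longrightarrow> card I - card R \<le> card I - card y"
    using ex_has_least_nat[of "\<lambda>y. y \<in> F \<and> C \<subseteq> y" C "\<lambda>y. card I - card y"] assms(2) by blast
  have "R \<in> roots F" unfolding roots_def mem_Collect_eq
  proof (intro conjI ballI impI)
    show "R \<in> F" using R by simp
    fix D assume D: "D \<in> F" "R \<subseteq> D"
    have "card D \<le> card I" "card R \<le> card I" using forestD(1,3)[OF assms(1)] D R card_mono by metis+
    moreover have "card I - card R \<le> card I - card D" using mx D R by blast
    ultimately have "card D \<le> card R" by linarith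
    moreover have "card R \<le> card D" using card_mono[OF forest_fin[OF assms(1) D(1)] D(2)] .
    ultimately have "card R = card D" by simp
    then show "D = R" using card_subset_eq[OF forest_fin[OF assms(1) D(1)] D(2)] by simp
  qed
  then show ?thesis using R by blast
qed

lemma roots_in: "R \<in> roots F \<Longrightarrow> R \<in> F"
  unfolding roots_def by blast

lemma roots_sub:
  assumes "forest I F" "R \<in> roots F" "C \<in> F" "C \<inter> R \<noteq> {}" shows "C \<subseteq> R"
proof -
  have R: "R \<in> F" "\<And>D. D \<in> F \<Longrightarrow> R \<subseteq> D \<Longrightarrow> D = R" using assms(2) unfolding roots_def by auto
  have "C \<subseteq> R \<or> R \<subseteq> C \<or> C \<inter> R = {}" using forestD(5)[OF assms(1) assms(3) R(1)] .
  then show ?thesis using R(2)[OF assms(3)] assms(4) by blast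
qed

lemma roots_disj:
  assumes "forest I F" "R \<in> roots F" "R' \<in> roots F" "R \<inter> R' \<noteq> {}" shows "R = R'"
proof -
  have "R \<subseteq> R'" using roots_sub[OF assms(1,3) roots_in[OF assms(2)] assms(4)] .
  then show ?thesis using assms(2,3) unfolding roots_def by blast
qed

lemma roots_partn: "forest I F \<Longrightarrow> partn I (roots F)"
  unfolding partn_def
proof (intro conjI ballI impI)
  assume f: "forest I F"
  show "\<And>p. p \<in> roots F \<Longrightarrow> p \<noteq> {}" using forestD(2)[OF f] roots_in by blast
  show "\<And>p q. p \<in> roots F \<Longrightarrow> q \<in> roots F \<Longrightarrow> p \<inter> q \<noteq> {} \<Longrightarrow> p = q" using roots_disj[OF f] by blast
  show "\<Union> (roots F) = I"
  proof
    show "\<Union> (roots F) \<subseteq> I" using forestD(3)[OF f] roots_in by blast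
    show "I \<subseteq> \<Union> (roots F)"
    proof
      fix i assume "i \<in> I"
      then have "{i} \<in> F" using forestD(4)[OF f] by blast
      then show "i \<in> \<Union> (roots F)" using roots_exist[OF f] by blast
    qed
  qed
qed

lemma forest_mapD:
  assumes "forest_map I F G phi"
  shows "\<And>C. C \<in> F \<Longrightarrow> phi C \<in> G" "\<And>i. i \<in> I \<Longrightarrow> phi {i} = {i}"
    "\<And>C. C \<in> inner F \<Longrightarrow> phi C \<in> inner G" "inj_on phi (inner F)"
    "\<And>C D. C \<in> F \<Longrightarrow> D \<in> F \<Longrightarrow> C \<subseteq> D \<Longrightarrow> phi C \<subseteq> phi D"
    "\<And>C C1 C2. C \<in> F \<Longrightarrow> C1 \<in> F \<Longrightarrow> C2 \<in> F \<Longrightarrow> children C C1 C2 \<Longrightarrow> phi C1 \<subset> phi C"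
    "\<And>C C1 C2. C \<in> F \<Longrightarrow> C1 \<in> F \<Longrightarrow> C2 \<in> F \<Longrightarrow> children C C1 C2 \<Longrightarrow> phi C2 \<subset> phi C"
    "\<And>C C1 C2. C \<in> F \<Longrightarrow> C1 \<in> F \<Longrightarrow> C2 \<in> F \<Longrightarrow> children C C1 C2 \<Longrightarrow>
        \<not> (\<exists>K\<in>G. K \<subset> phi C \<and> phi C1 \<union> phi C2 \<subseteq> K)"
proof -
  have f: "(\<forall>C\<in>F. phi C \<in> G)
   \<and> (\<forall>i\<in>I. phi {i} = {i})
   \<and> (\<forall>C\<in>inner F. phi C \<in> inner G) \<and> inj_on phi (inner F)
   \<and> (\<forall>C\<in>F. \<forall>D\<in>F. C \<subseteq> D \<longrightarrow> phi C \<subseteq> phi D)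
   \<and> (\<forall>C\<in>F. \<forall>C1\<in>F. \<forall>C2\<in>F. children C C1 C2 \<longrightarrow>
        phi C1 \<subset> phi C \<and> phi C2 \<subset> phi C \<and>
        \<not> (\<exists>K\<in>G. K \<subset> phi C \<and> phi C1 \<union> phi C2 \<subseteq> K))" using assms unfolding forest_map_def .
  have f1: "\<forall>C\<in>F. phi C \<in> G" using f by (elim conjE) assumption
  have f2: "\<forall>i\<in>I. phi {i} = {i}" using f by (elim conjE) assumption
  have f3: "\<forall>C\<in>inner F. phi C \<in> inner G" using f by (elim conjE) assumption
  have f4: "inj_on phi (inner F)" using f by (elim conjE) assumption
  have f5: "\<forall>C\<in>F. \<forall>D\<in>F. C \<subseteq> D \<longrightarrow> phi C \<subseteq> phi D" using f by (elim conjE) assumption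
  have f6: "\<forall>C\<in>F. \<forall>C1\<in>F. \<forall>C2\<in>F. children C C1 C2 \<longrightarrow>
        phi C1 \<subset> phi C \<and> phi C2 \<subset> phi C \<and>
        \<not> (\<exists>K\<in>G. K \<subset> phi C \<and> phi C1 \<union> phi C2 \<subseteq> K)" using f by (elim conjE) assumption
  show "\<And>C. C \<in> F \<Longrightarrow> phi C \<in> G" using f1 by (rule bspec)
  show "\<And>i. i \<in> I \<Longrightarrow> phi {i} = {i}" using f2 by (rule bspec)
  show "\<And>C. C \<in> inner F \<Longrightarrow> phi C \<in> inner G" using f3 by (rule bspec)
  show "inj_on phi (inner F)" by (rule f4)
  show "\<And>C D. C \<in> F \<Longrightarrow> D \<in> F \<Longrightarrow> C \<subseteq> D \<Longrightarrow> phi C \<subseteq> phi D" using f5 by blast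
  fix C C1 C2 assume a: "C \<in> F" "C1 \<in> F" "C2 \<in> F" "children C C1 C2"
  have g: "phi C1 \<subset> phi C \<and> phi C2 \<subset> phi C \<and>
        \<not> (\<exists>K\<in>G. K \<subset> phi C \<and> phi C1 \<union> phi C2 \<subseteq> K)" using f6[rule_format, OF a] .
  show "phi C1 \<subset> phi C" using g by (elim conjE)
  show "phi C2 \<subset> phi C" using g by (elim conjE)
  show "\<not> (\<exists>K\<in>G. K \<subset> phi C \<and> phi C1 \<union> phi C2 \<subseteq> K)" using g by (elim conjE)
qed

lemma forest_mapI:
  assumes "\<And>C. C \<in> F \<Longrightarrow> phi C \<in> G" "\<And>i. i \<in> I \<Longrightarrow> phi {i} = {i}"
    "\<And>C. C \<in> inner F \<Longrightarrow> phi C \<in> inner G" "inj_on phi (inner F)"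
    "\<And>C D. C \<in> F \<Longrightarrow> D \<in> F \<Longrightarrow> C \<subseteq> D \<Longrightarrow> phi C \<subseteq> phi D"
    "\<And>C C1 C2. C \<in> F \<Longrightarrow> C1 \<in> F \<Longrightarrow> C2 \<in> F \<Longrightarrow> children C C1 C2 \<Longrightarrow>
        phi C1 \<subset> phi C \<and> phi C2 \<subset> phi C \<and> \<not> (\<exists>K\<in>G. K \<subset> phi C \<and> phi C1 \<union> phi C2 \<subseteq> K)"
  shows "forest_map I F G phi"
  unfolding forest_map_def
proof (intro conjI ballI impI)
  show "\<And>C. C \<in> F \<Longrightarrow> phi C \<in> G" by (rule assms(1))
  show "\<And>i. i \<in> I \<Longrightarrow> phi {i} = {i}" by (rule assms(2))
  show "\<And>C. C \<in> inner F \<Longrightarrow> phi C \<in> inner G" by (rule assms(3))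
  show "inj_on phi (inner F)" by (rule assms(4))
  show "\<And>C D. C \<in> F \<Longrightarrow> D \<in> F \<Longrightarrow> C \<subseteq> D \<Longrightarrow> phi C \<subseteq> phi D" by (rule assms(5))
  fix C C1 C2 assume a: "C \<in> F" "C1 \<in> F" "C2 \<in> F" "children C C1 C2"
  show "phi C1 \<subset> phi C" using assms(6)[OF a] by blast
  show "phi C2 \<subset> phi C" using assms(6)[OF a] by blast
  show "\<not> (\<exists>K\<in>G. K \<subset> phi C \<and> phi C1 \<union> phi C2 \<subseteq> K)" using assms(6)[OF a] by blast
qed

lemma inner_iff: "C \<in> inner F \<longleftrightarrow> C \<in> F \<and> card C \<ge> 2"
  unfolding inner_def by simp

lemma card_lt_sub: "forest I F \<Longrightarrow> C \<in> F \<Longrightarrow> C' \<subset> C \<Longrightarrow> card C' < card C"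
  by (rule psubset_card_mono[OF forest_fin])

lemma card_le_sub: "forest I F \<Longrightarrow> C \<in> F \<Longrightarrow> C' \<subseteq> C \<Longrightarrow> card C' \<le> card C"
  by (rule card_mono[OF forest_fin])

lemma fmap_lca:
  assumes fF: "forest I F" and fG: "forest I G" and m: "forest_map I F G phi"
  shows "C \<in> F \<Longrightarrow> phi C = lca G C \<and> C \<subseteq> phi C"
proof (induction "card C" arbitrary: C rule: less_induct)
  case (less C)
  show ?case
  proof (cases "card C \<ge> 2")
    case False
    then obtain i where i: "i \<in> I" "C = {i}" using forest_small[OF fF less.prems] by blast
    have "{i} \<in> G" using forestD(4)[OF fG i(1)] .
    then show ?thesis using forest_mapD(2)[OF m i(1)] lca_self i(2) by auto
  next
    case True
    then obtain C1 C2 where c: "C1 \<in> F" "C2 \<in> F" "children C C1 C2" using forestD(6)[OF fF less.prems] by blast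
    have p: "C1 \<subset> C" "C2 \<subset> C" using child_proper[OF c(3)] by auto
    have ih1: "phi C1 = lca G C1 \<and> C1 \<subseteq> phi C1"
      using less.hyps[OF card_lt_sub[OF fF less.prems p(1)] c(1)] .
    have ih2: "phi C2 = lca G C2 \<and> C2 \<subseteq> phi C2"
      using less.hyps[OF card_lt_sub[OF fF less.prems p(2)] c(2)] .
    have s1: "phi C1 \<subset> phi C" using forest_mapD(6)[OF m less.prems c] .
    have s2: "phi C2 \<subset> phi C" using forest_mapD(7)[OF m less.prems c] .
    have nK: "\<not> (\<exists>K\<in>G. K \<subset> phi C \<and> phi C1 \<union> phi C2 \<subseteq> K)" using forest_mapD(8)[OF m less.prems c] .
    have CU: "C = C1 \<union> C2" using c(3) unfolding children_def by blast
    have Cphi: "C \<subseteq> phi C" using CU ih1 ih2 s1 s2 by blast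
    have pG: "phi C \<in> G" using forest_mapD(1)[OF m less.prems] .
    have Cne: "C \<noteq> {}" using forestD(2)[OF fF less.prems] .
    have lG: "lca G C \<in> G" using lca_in[OF fG Cne pG Cphi] .
    have l1: "lca G C \<subseteq> phi C" using lca_lower[OF pG Cphi] .
    have l2: "phi C1 \<union> phi C2 \<subseteq> lca G C"
      using ih1 ih2 lca_mono[of C1 C G] lca_mono[of C2 C G] CU by blast
    have "lca G C = phi C"
    proof (rule ccontr)
      assume "lca G C \<noteq> phi C"
      then have "lca G C \<subset> phi C" using l1 by blast
      then show False using nK lG l2 by blast
    qed
    then show ?thesis using Cphi by simp
  qed
qed

lemma fmap_lcaI:
  assumes fX: "forest I X" and fA: "forest I A"
    and cov: "\<And>C. C \<in> X \<Longrightarrow> \<exists>D\<in>A. C \<subseteq> D"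
    and inj: "inj_on (lca A) (inner X)"
    and st: "\<And>C C1 C2. C \<in> X \<Longrightarrow> C1 \<in> X \<Longrightarrow> C2 \<in> X \<Longrightarrow> children C C1 C2 \<Longrightarrow>
                lca A C1 \<noteq> lca A C \<and> lca A C2 \<noteq> lca A C"
  shows "forest_map I X A (lca A)"
proof (rule forest_mapI)
  show inA: "\<And>C. C \<in> X \<Longrightarrow> lca A C \<in> A"
  proof -
    fix C assume C: "C \<in> X"
    obtain D where "D \<in> A" "C \<subseteq> D" using cov[OF C] by blast
    then show "lca A C \<in> A" using lca_in[OF fA forestD(2)[OF fX C]] by blast
  qed
  show "\<And>i. i \<in> I \<Longrightarrow> lca A {i} = {i}" by (rule lca_self[OF forestD(4)[OF fA]])
  show "\<And>C. C \<in> inner X \<Longrightarrow> lca A C \<in> inner A"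
  proof -
    fix C assume C: "C \<in> inner X"
    then have C': "C \<in> X" "card C \<ge> 2" unfolding inner_def by auto
    have "lca A C \<in> A" using inA[OF C'(1)] .
    moreover have "card C \<le> card (lca A C)" using card_le_sub[OF fA \<open>lca A C \<in> A\<close> lca_upper] .
    ultimately show "lca A C \<in> inner A" using C'(2) unfolding inner_def by auto
  qed
  show "inj_on (lca A) (inner X)" by (rule inj)
  show "\<And>C D. C \<in> X \<Longrightarrow> D \<in> X \<Longrightarrow> C \<subseteq> D \<Longrightarrow> lca A C \<subseteq> lca A D" by (rule lca_mono)
  fix C C1 C2 assume a: "C \<in> X" "C1 \<in> X" "C2 \<in> X" "children C C1 C2"
  have CU: "C = C1 \<union> C2" using a(4) unfolding children_def by blast
  have "C1 \<subseteq> C" "C2 \<subseteq> C" using CU by blast+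
  then have m1: "lca A C1 \<subseteq> lca A C" "lca A C2 \<subseteq> lca A C" using lca_mono by metis+
  have ne: "lca A C1 \<noteq> lca A C" "lca A C2 \<noteq> lca A C" using st[OF a] by auto
  have nK: "\<not> (\<exists>K\<in>A. K \<subset> lca A C \<and> lca A C1 \<union> lca A C2 \<subseteq> K)"
  proof
    assume "\<exists>K\<in>A. K \<subset> lca A C \<and> lca A C1 \<union> lca A C2 \<subseteq> K"
    then obtain K where K: "K \<in> A" "K \<subset> lca A C" "lca A C1 \<union> lca A C2 \<subseteq> K" by blast
    have "C \<subseteq> K" using K(3) lca_upper[of C1 A] lca_upper[of C2 A] CU by blast
    then have "lca A C \<subseteq> K" using lca_lower[OF K(1)] by blast
    then show False using K(2) by blast
  qed
  show "lca A C1 \<subset> lca A C \<and> lca A C2 \<subset> lca A C \<and> \<not> (\<exists>K\<in>A. K \<subset> lca A C \<and> lca A C1 \<union> lca A C2 \<subseteq> K)"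
    using m1 ne nK by blast
qed

lemma fmap_cong:
  assumes fF: "forest I F" and m: "forest_map I F G phi" and eq: "\<And>C. C \<in> F \<Longrightarrow> psi C = phi C"
  shows "forest_map I F G psi"
proof (rule forest_mapI)
  show "\<And>C. C \<in> F \<Longrightarrow> psi C \<in> G" using forest_mapD(1)[OF m] eq by simp
  show "\<And>i. i \<in> I \<Longrightarrow> psi {i} = {i}" using forest_mapD(2)[OF m] eq forestD(4)[OF fF] by simp
  show "\<And>C. C \<in> inner F \<Longrightarrow> psi C \<in> inner G" using forest_mapD(3)[OF m] eq unfolding inner_def by simp
  show "inj_on psi (inner F)" using forest_mapD(4)[OF m] eq inj_on_cong[of "inner F" psi phi]
    unfolding inner_def by simp
  show "\<And>C D. C \<in> F \<Longrightarrow> D \<in> F \<Longrightarrow> C \<subseteq> D \<Longrightarrow> psi C \<subseteq> psi D" using forest_mapD(5)[OF m] eq by simp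
  fix C C1 C2 assume a: "C \<in> F" "C1 \<in> F" "C2 \<in> F" "children C C1 C2"
  show "psi C1 \<subset> psi C \<and> psi C2 \<subset> psi C \<and> \<not> (\<exists>K\<in>G. K \<subset> psi C \<and> psi C1 \<union> psi C2 \<subseteq> K)"
    using forest_mapD(6,7,8)[OF m a] eq[OF a(1)] eq[OF a(2)] eq[OF a(3)] by simp
qed

lemma le_lca:
  assumes "forest_le I F A"
  shows "forest_map I F A (lca A)" "vT I A F = lca A ` inner F"
proof -
  have fF: "forest I F" and fA: "forest I A" and ex: "\<exists>phi. forest_map I F A phi"
    using assms unfolding forest_le_def by auto
  then obtain phi where m: "forest_map I F A phi" by blast
  have e1: "\<And>C. C \<in> F \<Longrightarrow> lca A C = phi C" using fmap_lca[OF fF fA m] by simp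
  show "forest_map I F A (lca A)" using fmap_cong[OF fF m e1] .
  have m2: "forest_map I F A (SOME phi. forest_map I F A phi)" using someI_ex[OF ex] .
  have e2: "\<And>C. C \<in> F \<Longrightarrow> (SOME phi. forest_map I F A phi) C = lca A C"
    using fmap_lca[OF fF fA m2] by simp
  have "\<And>C. C \<in> inner F \<Longrightarrow> (SOME phi. forest_map I F A phi) C = lca A C"
    using e2 unfolding inner_def by simp
  then show "vT I A F = lca A ` inner F" unfolding vT_def by (rule image_cong[OF refl])
qed

lemma K_lemma:
  assumes fG: "forest I G" and fA: "forest I A" and m: "forest_map I G A (lca A)"
  shows "X \<in> G \<Longrightarrow> w \<in> A \<Longrightarrow> w \<inter> X \<noteq> {} \<Longrightarrow> w \<inter> X \<in> G"
proof (induction "card X" arbitrary: X rule: less_induct)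
  case (less X)
  show ?case
  proof (cases "X \<subseteq> w")
    case True
    then have "w \<inter> X = X" by blast
    then show ?thesis using less.prems(1) by simp
  next
    case nsub: False
    have c2: "card X \<ge> 2"
    proof (rule ccontr)
      assume "\<not> card X \<ge> 2"
      then obtain i where "X = {i}" using forest_small[OF fG less.prems(1)] by blast
      then show False using nsub less.prems(3) by blast
    qed
    obtain X1 X2 where c: "X1 \<in> G" "X2 \<in> G" "children X X1 X2" using forestD(6)[OF fG less.prems(1) c2] by blast
    have s1: "lca A X1 \<subset> lca A X" using forest_mapD(6)[OF m less.prems(1) c] .
    have s2: "lca A X2 \<subset> lca A X" using forest_mapD(7)[OF m less.prems(1) c] .
    have nK: "\<not> (\<exists>K\<in>A. K \<subset> lca A X \<and> lca A X1 \<union> lca A X2 \<subseteq> K)" using forest_mapD(8)[OF m less.prems(1) c] .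
    have xA: "lca A X \<in> A" using forest_mapD(1)[OF m less.prems(1)] .
    have a1: "lca A X1 \<in> A" using forest_mapD(1)[OF m c(1)] .
    have a2: "lca A X2 \<in> A" using forest_mapD(1)[OF m c(2)] .
    have "card X \<le> card (lca A X)" using card_le_sub[OF fA xA lca_upper] .
    then obtain x1 x2 where xc: "x1 \<in> A" "x2 \<in> A" "children (lca A X) x1 x2"
      using forestD(6)[OF fA xA] c2 by force
    have br: "(lca A X1 \<subseteq> x1 \<and> lca A X2 \<subseteq> x2) \<or> (lca A X1 \<subseteq> x2 \<and> lca A X2 \<subseteq> x1)"
      using branch[OF fA xc(3) xc(1) xc(2) a1 a2 s1 s2 nK] .
    have XU: "X = X1 \<union> X2" using c(3) unfolding children_def by blast
    have wx: "w \<inter> lca A X \<noteq> {}" using less.prems(3) lca_upper[of X A] by blast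
    have lam: "w \<subseteq> lca A X \<or> lca A X \<subseteq> w \<or> w \<inter> lca A X = {}" using forestD(5)[OF fA less.prems(2) xA] .
    have "\<not> lca A X \<subseteq> w" using nsub lca_upper[of X A] by blast
    then have wsub: "w \<subseteq> lca A X" using lam wx by blast
    have "w \<noteq> lca A X" using nsub lca_upper[of X A] by blast
    then have wch: "w \<subseteq> x1 \<or> w \<subseteq> x2" using child_sub[OF fA xc(3) xc(1) xc(2) less.prems(2) wsub] by blast
    have dj: "x1 \<inter> x2 = {}" using xc(3) unfolding children_def by blast
    have u1: "X1 \<subseteq> lca A X1" and u2: "X2 \<subseteq> lca A X2" by (rule lca_upper)+
    have "w \<inter> X1 = {} \<or> w \<inter> X2 = {}" using br wch dj u1 u2 by blast
    then show ?thesis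
    proof
      assume e: "w \<inter> X1 = {}"
      then have eq: "w \<inter> X = w \<inter> X2" using XU by blast
      have "X2 \<subset> X" using child_proper[OF c(3)] by blast
      then have "card X2 < card X" using card_lt_sub[OF fG less.prems(1)] by blast
      then have "w \<inter> X2 \<in> G" using less.hyps c(2) less.prems(2) less.prems(3) eq by metis
      then show ?thesis using eq by simp
    next
      assume e: "w \<inter> X2 = {}"
      then have eq: "w \<inter> X = w \<inter> X1" using XU by blast
      have "X1 \<subset> X" using child_proper[OF c(3)] by blast
      then have "card X1 < card X" using card_lt_sub[OF fG less.prems(1)] by blast
      then have "w \<inter> X1 \<in> G" using less.hyps c(1) less.prems(2) less.prems(3) eq by metis
      then show ?thesis using eq by simp
    qed
  qed
qed

lemma KC:
  assumes fG: "forest I G" and fA: "forest I A" and m: "forest_map I G A (lca A)"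
    and C: "C \<in> G" and D: "D \<in> G" and CD: "C \<subseteq> D"
  shows "lca A C \<inter> D = C"
proof -
  let ?Z = "lca A C \<inter> D"
  have aA: "lca A C \<in> A" using forest_mapD(1)[OF m C] .
  have CZ: "C \<subseteq> ?Z" using CD lca_upper[of C A] by blast
  have Cne: "C \<noteq> {}" using forestD(2)[OF fG C] .
  have ZG: "?Z \<in> G" using K_lemma[OF fG fA m D aA] CZ Cne by blast
  have "lca A ?Z \<subseteq> lca A C" using lca_lower[OF aA] by blast
  moreover have "lca A C \<subseteq> lca A ?Z" using lca_mono[OF CZ] .
  ultimately have leq: "lca A ?Z = lca A C" by blast
  show ?thesis
  proof (cases "card C \<ge> 2")
    case True
    have "card C \<le> card ?Z" using card_le_sub[OF fG ZG CZ] .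
    then have "?Z \<in> inner G" "C \<in> inner G" using True ZG C unfolding inner_def by auto
    then show ?thesis using forest_mapD(4)[OF m] leq unfolding inj_on_def by blast
  next
    case False
    then obtain i where i: "i \<in> I" "C = {i}" using forest_small[OF fG C] by blast
    have "lca A C = {i}" using lca_self[OF forestD(4)[OF fA i(1)]] i(2) by simp
    then show ?thesis using CD i(2) by blast
  qed
qed

lemma lca_comp:
  assumes fG: "forest I G" and fA: "forest I A" and m: "forest_map I G A (lca A)"
    and Cne: "C \<noteq> {}" and D: "D \<in> G" and CD: "C \<subseteq> D"
  shows "lca A (lca G C) = lca A C" "lca G C \<subseteq> lca A C"
proof -
  have dA: "lca A D \<in> A" using forest_mapD(1)[OF m D] .
  have "C \<subseteq> lca A D" using CD lca_upper[of D A] by blast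
  then have aA: "lca A C \<in> A" using lca_in[OF fA Cne dA] by blast
  have "lca A C \<inter> D \<noteq> {}" using Cne CD lca_upper[of C A] by blast
  then have "lca A C \<inter> D \<in> G" using K_lemma[OF fG fA m D aA] by blast
  moreover have "C \<subseteq> lca A C \<inter> D" using CD lca_upper[of C A] by blast
  ultimately have "lca G C \<subseteq> lca A C \<inter> D" using lca_lower by blast
  then show gs: "lca G C \<subseteq> lca A C" by blast
  have "lca A (lca G C) \<subseteq> lca A C" using lca_lower[OF aA gs] .
  moreover have "lca A C \<subseteq> lca A (lca G C)" using lca_mono[OF lca_upper[of C G]] .
  ultimately show "lca A (lca G C) = lca A C" by blast
qed

lemma refine_map:
  assumes fF: "forest I F" and fG: "forest I G" and fA: "forest I A"
    and mF: "forest_map I F A (lca A)" and mG: "forest_map I G A (lca A)"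
    and cov: "\<And>C. C \<in> F \<Longrightarrow> \<exists>D\<in>G. C \<subseteq> D"
  shows "forest_map I F G (lca G)"
proof -
  have comp: "lca A (lca G C) = lca A C" if C: "C \<in> F" for C
  proof -
    obtain D where "D \<in> G" "C \<subseteq> D" using cov[OF C] by blast
    then show ?thesis using lca_comp(1)[OF fG fA mG forestD(2)[OF fF C]] by blast
  qed
  show ?thesis
  proof (rule fmap_lcaI[OF fF fG cov])
    show "inj_on (lca G) (inner F)"
    proof (rule inj_onI)
      fix C C' assume a: "C \<in> inner F" "C' \<in> inner F" "lca G C = lca G C'"
      have "C \<in> F" "C' \<in> F" using a unfolding inner_def by auto
      then have "lca A C = lca A C'" using comp a(3) by metis
      then show "C = C'" using forest_mapD(4)[OF mF] a(1,2) unfolding inj_on_def by blast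
    qed
    fix C C1 C2 assume a: "C \<in> F" "C1 \<in> F" "C2 \<in> F" "children C C1 C2"
    have s1: "lca A C1 \<subset> lca A C" using forest_mapD(6)[OF mF a] .
    have s2: "lca A C2 \<subset> lca A C" using forest_mapD(7)[OF mF a] .
    show "lca G C1 \<noteq> lca G C \<and> lca G C2 \<noteq> lca G C"
      using s1 s2 comp[OF a(1)] comp[OF a(2)] comp[OF a(3)] by force
  qed
qed

lemma eq_roots:
  assumes fF: "forest I F" and fA: "forest I A" and mF: "forest_map I F A (lca A)"
    and r: "roots F = roots A"
  shows "F = A"
proof
  show "F \<subseteq> A"
  proof
    fix C assume C: "C \<in> F"
    obtain R where R: "R \<in> roots F" "C \<subseteq> R" using roots_exist[OF fF C] by blast
    have RA: "R \<in> A" using roots_in R(1) r by metis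
    have RF: "R \<in> F" using roots_in R(1) by metis
    have "lca A C \<subseteq> R" using lca_lower[OF RA R(2)] .
    moreover have "lca A C \<inter> R = C" using KC[OF fF fA mF C RF R(2)] .
    ultimately have "lca A C = C" by blast
    then show "C \<in> A" using forest_mapD(1)[OF mF C] by simp
  qed
  show "A \<subseteq> F"
  proof
    fix w assume w: "w \<in> A"
    obtain R where R: "R \<in> roots A" "w \<subseteq> R" using roots_exist[OF fA w] by blast
    have RF: "R \<in> F" using roots_in R(1) r by metis
    have "w \<inter> R = w" using R(2) by blast
    moreover have "w \<inter> R \<noteq> {}" using forestD(2)[OF fA w] R(2) by blast
    ultimately show "w \<in> F" using K_lemma[OF fF fA mF RF w] by simp
  qed
qed

lemma same_roots:
  assumes f1: "forest I G1" and f2: "forest I G2" and fT: "forest I T"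
    and m1: "forest_map I G1 T (lca T)" and m2: "forest_map I G2 T (lca T)"
    and r: "roots G1 = roots G2"
  shows "G1 \<subseteq> G2"
proof
  fix C assume C: "C \<in> G1"
  obtain R where R: "R \<in> roots G1" "C \<subseteq> R" using roots_exist[OF f1 C] by blast
  have R1: "R \<in> G1" using roots_in R(1) by metis
  have R2: "R \<in> G2" using roots_in R(1) r by metis
  have e: "lca T C \<inter> R = C" using KC[OF f1 fT m1 C R1 R(2)] .
  have tA: "lca T C \<in> T" using forest_mapD(1)[OF m1 C] .
  have "lca T C \<inter> R \<noteq> {}" using e forestD(2)[OF f1 C] by simp
  then have "lca T C \<inter> R \<in> G2" using K_lemma[OF f2 fT m2 R2 tA] by blast
  then show "C \<in> G2" using e by simp
qed

lemma nonempty_gap: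
  assumes fF: "forest I F" and fA: "forest I A" and mF: "forest_map I F A (lca A)"
    and ne: "F \<noteq> A"
  shows "\<exists>u\<in>inner A. u \<notin> lca A ` inner F"
proof (cases "\<forall>w\<in>A. \<exists>R\<in>roots F. w \<subseteq> R")
  case True
  have "F = A"
  proof
    show "A \<subseteq> F"
    proof
      fix w assume w: "w \<in> A"
      obtain R where R: "R \<in> roots F" "w \<subseteq> R" using True w by blast
      have RF: "R \<in> F" using roots_in R(1) by metis
      have "w \<inter> R = w" using R(2) by blast
      moreover have "w \<inter> R \<noteq> {}" using forestD(2)[OF fA w] R(2) by blast
      ultimately show "w \<in> F" using K_lemma[OF fF fA mF RF w] by simp
    qed
    show "F \<subseteq> A"
    proof
      fix C assume C: "C \<in> F"
      obtain R where R: "R \<in> roots F" "C \<subseteq> R" using roots_exist[OF fF C] by blast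
      have RF: "R \<in> F" using roots_in R(1) by metis
      have aA: "lca A C \<in> A" using forest_mapD(1)[OF mF C] .
      obtain R' where R': "R' \<in> roots F" "lca A C \<subseteq> R'" using True aA by blast
      have "R' \<inter> R \<noteq> {}" using R(2) R'(2) lca_upper[of C A] forestD(2)[OF fF C] by blast
      then have "R' = R" using roots_disj[OF fF R'(1) R(1)] by simp
      moreover have "lca A C \<inter> R = C" using KC[OF fF fA mF C RF R(2)] .
      ultimately have "lca A C = C" using R'(2) by blast
      then show "C \<in> A" using aA by simp
    qed
  qed
  then show ?thesis using ne by simp
next
  case False
  then obtain u0 where u0: "u0 \<in> A" "\<not> (\<exists>R\<in>roots F. u0 \<subseteq> R)" by blast
  have ex: "\<exists>x. (x \<in> A \<and> \<not> (\<exists>R\<in>roots F. x \<subseteq> R)) \<and>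
      (\<forall>y. y \<in> A \<and> \<not> (\<exists>R\<in>roots F. y \<subseteq> R) \<longrightarrow> card x \<le> card y)"
    by (rule ex_has_least_nat[of "\<lambda>y. y \<in> A \<and> \<not> (\<exists>R\<in>roots F. y \<subseteq> R)" u0 card]) (simp add: u0)
  then obtain u where u: "u \<in> A" "\<not> (\<exists>R\<in>roots F. u \<subseteq> R)"
    and mn: "\<And>y. y \<in> A \<Longrightarrow> \<not> (\<exists>R\<in>roots F. y \<subseteq> R) \<Longrightarrow> card u \<le> card y" by blast
  have c2: "card u \<ge> 2"
  proof (rule ccontr)
    assume "\<not> card u \<ge> 2"
    then obtain i where i: "i \<in> I" "u = {i}" using forest_small[OF fA u(1)] by blast
    have "{i} \<in> F" using forestD(4)[OF fF i(1)] .
    then show False using roots_exist[OF fF] u(2) i(2) by blast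
  qed
  obtain u1 u2 where c: "u1 \<in> A" "u2 \<in> A" "children u u1 u2" using forestD(6)[OF fA u(1) c2] by blast
  have p: "u1 \<subset> u" "u2 \<subset> u" using child_proper[OF c(3)] by auto
  have "card u1 < card u" using card_lt_sub[OF fA u(1) p(1)] .
  then obtain Ra where Ra: "Ra \<in> roots F" "u1 \<subseteq> Ra" using mn[OF c(1)] by force
  have "card u2 < card u" using card_lt_sub[OF fA u(1) p(2)] .
  then obtain Rb where Rb: "Rb \<in> roots F" "u2 \<subseteq> Rb" using mn[OF c(2)] by force
  have uU: "u = u1 \<union> u2" using c(3) unfolding children_def by blast
  have nab: "Ra \<noteq> Rb" using u(2) Ra Rb uU by blast
  have "u \<notin> lca A ` inner F"
  proof
    assume "u \<in> lca A ` inner F"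
    then obtain C where C: "C \<in> inner F" "u = lca A C" by blast
    have CF: "C \<in> F" using C(1) unfolding inner_def by simp
    have sp: "C \<inter> u1 \<noteq> {} \<and> C \<inter> u2 \<noteq> {}" using lca_split_conv[OF c(3) c(1) c(2)] C(2) by simp
    obtain Rc where Rc: "Rc \<in> roots F" "C \<subseteq> Rc" using roots_exist[OF fF CF] by blast
    have "Rc \<inter> Ra \<noteq> {}" using sp Rc(2) Ra(2) by blast
    then have "Rc = Ra" using roots_disj[OF fF Rc(1) Ra(1)] by simp
    moreover have "Rc \<inter> Rb \<noteq> {}" using sp Rc(2) Rb(2) by blast
    then have "Rc = Rb" using roots_disj[OF fF Rc(1) Rb(1)] by simp
    ultimately show False using nab by simp
  qed
  moreover have "u \<in> inner A" using u(1) c2 unfolding inner_def by simp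
  ultimately show ?thesis by blast
qed

lemma below_in:
  assumes fF: "forest I F" and fA: "forest I A" and mF: "forest_map I F A (lca A)"
    and mn: "\<And>u. u \<in> inner A \<Longrightarrow> u \<subset> v \<Longrightarrow> u \<in> lca A ` inner F"
  shows "u \<in> A \<Longrightarrow> u \<subset> v \<Longrightarrow> u \<in> F"
proof (induction "card u" arbitrary: u rule: less_induct)
  case (less u)
  show ?case
  proof (cases "card u \<ge> 2")
    case False
    then obtain i where i: "i \<in> I" "u = {i}" using forest_small[OF fA less.prems(1)] by blast
    then show ?thesis using forestD(4)[OF fF i(1)] by simp
  next
    case True
    obtain u1 u2 where c: "u1 \<in> A" "u2 \<in> A" "children u u1 u2" using forestD(6)[OF fA less.prems(1) True] by blast
    have p: "u1 \<subset> u" "u2 \<subset> u" using child_proper[OF c(3)] by auto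
    have "card u1 < card u" using card_lt_sub[OF fA less.prems(1) p(1)] .
    moreover have "u1 \<subset> v" using p(1) less.prems(2) by blast
    ultimately have u1F: "u1 \<in> F" using less.hyps c(1) by blast
    have "card u2 < card u" using card_lt_sub[OF fA less.prems(1) p(2)] .
    moreover have "u2 \<subset> v" using p(2) less.prems(2) by blast
    ultimately have u2F: "u2 \<in> F" using less.hyps c(2) by blast
    have "u \<in> inner A" using less.prems(1) True unfolding inner_def by simp
    then obtain C where C: "C \<in> inner F" "u = lca A C" using mn less.prems(2) by blast
    have CF: "C \<in> F" using C(1) unfolding inner_def by simp
    have sp: "C \<inter> u1 \<noteq> {} \<and> C \<inter> u2 \<noteq> {}" using lca_split_conv[OF c(3) c(1) c(2)] C(2) by simp
    have dj: "u1 \<inter> u2 = {}" and uU: "u = u1 \<union> u2" using c(3) unfolding children_def by blast+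
    have l1: "C \<subseteq> u1 \<or> u1 \<subseteq> C \<or> C \<inter> u1 = {}" using forestD(5)[OF fF CF u1F] .
    have l2: "C \<subseteq> u2 \<or> u2 \<subseteq> C \<or> C \<inter> u2 = {}" using forestD(5)[OF fF CF u2F] .
    have "u1 \<subseteq> C" using l1 sp dj by blast
    moreover have "u2 \<subseteq> C" using l2 sp dj by blast
    ultimately have "u \<subseteq> C" using uU by blast
    moreover have "C \<subseteq> u" using C(2) lca_upper[of C A] by simp
    ultimately show ?thesis using CF by (metis subset_antisym)
  qed
qed

lemma PhiE:
  assumes "C \<in> Phi A Q"
  obtains w q where "w \<in> A" "q \<in> Q" "w \<inter> q \<noteq> {}" "C = w \<inter> q"
  using assms unfolding Phi_def by blast

lemma PhiI: "w \<in> A \<Longrightarrow> q \<in> Q \<Longrightarrow> w \<inter> q \<noteq> {} \<Longrightarrow> w \<inter> q \<in> Phi A Q"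
  unfolding Phi_def by blast

lemma partnD:
  assumes "partn I P"
  shows "\<And>p. p \<in> P \<Longrightarrow> p \<noteq> {}" "\<Union>P = I" "\<And>p q. p \<in> P \<Longrightarrow> q \<in> P \<Longrightarrow> p \<inter> q \<noteq> {} \<Longrightarrow> p = q"
  using assms unfolding partn_def by auto

lemma Phi_block: "C \<in> Phi A Q \<Longrightarrow> \<exists>q\<in>Q. C \<subseteq> q"
  by (erule PhiE) blast

lemma Phi_cov: "C \<in> Phi A Q \<Longrightarrow> \<exists>D\<in>A. C \<subseteq> D"
  by (erule PhiE) blast

lemma Phi_ne: "C \<in> Phi A Q \<Longrightarrow> C \<noteq> {}"
  by (erule PhiE) blast

lemma Phi_lca:
  assumes pQ: "partn I Q" and C: "C \<in> Phi A Q" and q: "q \<in> Q" and Cq: "C \<subseteq> q"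
  shows "lca A C \<inter> q = C"
proof -
  obtain w q' where w: "w \<in> A" "q' \<in> Q" "w \<inter> q' \<noteq> {}" "C = w \<inter> q'" using C by (rule PhiE)
  have "q \<inter> q' \<noteq> {}" using w(3,4) Cq by blast
  then have "q = q'" using partnD(3)[OF pQ q w(2)] by simp
  have "lca A C \<subseteq> w" using lca_lower[OF w(1)] w(4) by blast
  then have "lca A C \<inter> q \<subseteq> C" using w(4) \<open>q = q'\<close> by blast
  moreover have "C \<subseteq> lca A C \<inter> q" using lca_upper[of C A] Cq by blast
  ultimately show ?thesis by blast
qed

lemma Phi_forest:
  assumes fA: "forest I A" and pQ: "partn I Q"
  shows "forest I (Phi A Q)"
  unfolding forest_def
proof (intro conjI ballI impI)
  show "finite I" using forestD(1)[OF fA] .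
  fix C assume C: "C \<in> Phi A Q"
  show "C \<noteq> {}" using Phi_ne[OF C] .
  show "C \<subseteq> I" using C by (rule PhiE) (use forestD(3)[OF fA] in blast)
next
  fix i assume i: "i \<in> I"
  obtain q where q: "q \<in> Q" "i \<in> q" using partnD(2)[OF pQ] i by blast
  have "{i} \<inter> q \<in> Phi A Q" using PhiI[OF forestD(4)[OF fA i] q(1)] q(2) by blast
  then show "{i} \<in> Phi A Q" using q(2) by (simp add: Int_absorb2)
next
  fix C D assume C: "C \<in> Phi A Q" and D: "D \<in> Phi A Q"
  obtain w q where w: "w \<in> A" "q \<in> Q" "C = w \<inter> q" using C by (rule PhiE)
  obtain w' q' where w': "w' \<in> A" "q' \<in> Q" "D = w' \<inter> q'" using D by (rule PhiE)
  show "C \<subseteq> D \<or> D \<subseteq> C \<or> C \<inter> D = {}"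
  proof (cases "q = q'")
    case True
    have "w \<subseteq> w' \<or> w' \<subseteq> w \<or> w \<inter> w' = {}" using forestD(5)[OF fA w(1) w'(1)] .
    then show ?thesis using w(3) w'(3) True by blast
  next
    case False
    then have "q \<inter> q' = {}" using partnD(3)[OF pQ w(2) w'(2)] by blast
    then show ?thesis using w(3) w'(3) by blast
  qed
next
  fix C assume C: "C \<in> Phi A Q" and c2: "card C \<ge> 2"
  obtain w q where w: "w \<in> A" "q \<in> Q" "C = w \<inter> q" using C by (rule PhiE)
  have Cne: "C \<noteq> {}" using Phi_ne[OF C] .
  have Cw: "C \<subseteq> w" using w(3) by blast
  have uA: "lca A C \<in> A" using lca_in[OF fA Cne w(1) Cw] .
  have "card C \<le> card (lca A C)" using card_le_sub[OF fA uA lca_upper] .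
  then obtain u1 u2 where c: "u1 \<in> A" "u2 \<in> A" "children (lca A C) u1 u2"
    using forestD(6)[OF fA uA] c2 by force
  have sp: "C \<inter> u1 \<noteq> {} \<and> C \<inter> u2 \<noteq> {}" using lca_split_conv[OF c(3) c(1) c(2)] by simp
  have Cq: "C \<subseteq> q" using w(3) by blast
  have e: "lca A C \<inter> q = C" using Phi_lca[OF pQ C w(2) Cq] .
  have i1: "u1 \<inter> q \<in> Phi A Q" using PhiI[OF c(1) w(2)] sp Cq by blast
  have i2: "u2 \<inter> q \<in> Phi A Q" using PhiI[OF c(2) w(2)] sp Cq by blast
  have "children C (u1 \<inter> q) (u2 \<inter> q)"
    using c(3) e sp Cq unfolding children_def by blast
  then show "\<exists>C1\<in>Phi A Q. \<exists>C2\<in>Phi A Q. children C C1 C2" using i1 i2 by blast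
qed

lemma Phi_strict:
  assumes pQ: "partn I Q" and C: "C \<in> Phi A Q" and C1: "C1 \<in> Phi A Q" and ch: "children C C1 C2"
  shows "lca A C1 \<noteq> lca A C"
proof
  assume eq: "lca A C1 = lca A C"
  obtain q where q: "q \<in> Q" "C \<subseteq> q" using Phi_block[OF C] by blast
  have C1C: "C1 \<subseteq> C" using ch unfolding children_def by blast
  have e1: "lca A C1 \<inter> q = C1" using Phi_lca[OF pQ C1 q(1)] C1C q(2) by blast
  have e2: "lca A C \<inter> q = C" using Phi_lca[OF pQ C q] .
  have "C1 = lca A C1 \<inter> q" using e1 by (rule sym)
  also have "\<dots> = lca A C \<inter> q" by (simp only: eq)
  also have "\<dots> = C" by (rule e2)
  finally have "C1 = C" .
  then show False using ch unfolding children_def by blast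
qed

lemma Phi_roots:
  assumes pQ: "partn I Q" and qc: "\<And>q. q \<in> Q \<Longrightarrow> \<exists>D\<in>A. q \<subseteq> D"
  shows "roots (Phi A Q) = Q"
proof -
  have qin: "q \<in> Phi A Q" if q: "q \<in> Q" for q
  proof -
    obtain D where D: "D \<in> A" "q \<subseteq> D" using qc[OF q] by blast
    have "D \<inter> q = q" using D(2) by blast
    then show ?thesis using PhiI[OF D(1) q] partnD(1)[OF pQ q] by simp
  qed
  show ?thesis
  proof
    show "roots (Phi A Q) \<subseteq> Q"
    proof
      fix R assume R: "R \<in> roots (Phi A Q)"
      have RP: "R \<in> Phi A Q" and mx: "\<And>D. D \<in> Phi A Q \<Longrightarrow> R \<subseteq> D \<Longrightarrow> D = R"
        using R unfolding roots_def by auto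
      obtain q where q: "q \<in> Q" "R \<subseteq> q" using Phi_block[OF RP] by blast
      have "q = R" using mx[OF qin[OF q(1)] q(2)] .
      then show "R \<in> Q" using q(1) by simp
    qed
    show "Q \<subseteq> roots (Phi A Q)"
    proof
      fix q assume q: "q \<in> Q"
      have "\<forall>D\<in>Phi A Q. q \<subseteq> D \<longrightarrow> D = q"
      proof (intro ballI impI)
        fix D assume D: "D \<in> Phi A Q" "q \<subseteq> D"
        obtain q' where q': "q' \<in> Q" "D \<subseteq> q'" using Phi_block[OF D(1)] by blast
        have "q \<inter> q' \<noteq> {}" using partnD(1)[OF pQ q] D(2) q'(2) by blast
        then have "q = q'" using partnD(3)[OF pQ q q'(1)] by simp
        then show "D = q" using D(2) q'(2) by blast
      qed
      then show "q \<in> roots (Phi A Q)" unfolding roots_def using qin[OF q] by blast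
    qed
  qed
qed

lemma Phi_map:
  assumes fA: "forest I A" and pQ: "partn I Q" and inj: "inj_on (lca A) (inner (Phi A Q))"
  shows "forest_map I (Phi A Q) A (lca A)"
proof (rule fmap_lcaI[OF Phi_forest[OF fA pQ] fA])
  show "\<And>C. C \<in> Phi A Q \<Longrightarrow> \<exists>D\<in>A. C \<subseteq> D" by (rule Phi_cov)
  show "inj_on (lca A) (inner (Phi A Q))" by (rule inj)
  fix C C1 C2 assume a: "C \<in> Phi A Q" "C1 \<in> Phi A Q" "C2 \<in> Phi A Q" "children C C1 C2"
  show "lca A C1 \<noteq> lca A C \<and> lca A C2 \<noteq> lca A C"
    using Phi_strict[OF pQ a(1) a(2) a(4)] Phi_strict[OF pQ a(1) a(3) children_sym[OF a(4)]] by simp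
qed

lemma mrg_partn:
  assumes pP: "partn I P" and X: "X \<in> P" and Y: "Y \<in> P" and XY: "X \<noteq> Y"
  shows "partn I (mrg P X Y)"
  unfolding partn_def mrg_def
proof (intro conjI ballI impI)
  show "\<And>p. p \<in> insert (X \<union> Y) (P - {X, Y}) \<Longrightarrow> p \<noteq> {}" using partnD(1)[OF pP] X by blast
  show "\<Union> (insert (X \<union> Y) (P - {X, Y})) = I" using partnD(2)[OF pP] X Y by blast
  fix p q assume p: "p \<in> insert (X \<union> Y) (P - {X, Y})" and q: "q \<in> insert (X \<union> Y) (P - {X, Y})"
    and pq: "p \<inter> q \<noteq> {}"
  show "p = q"
  proof (cases "p = X \<union> Y")
    case True
    show ?thesis
    proof (cases "q = X \<union> Y")
      case False
      then have q': "q \<in> P" "q \<noteq> X" "q \<noteq> Y" using q by auto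
      have "q \<inter> X = {}" using partnD(3)[OF pP q'(1) X] q'(2) by blast
      moreover have "q \<inter> Y = {}" using partnD(3)[OF pP q'(1) Y] q'(3) by blast
      ultimately show ?thesis using pq True by blast
    qed (use True in simp)
  next
    case False
    then have p': "p \<in> P" "p \<noteq> X" "p \<noteq> Y" using p by auto
    have "p \<inter> X = {}" using partnD(3)[OF pP p'(1) X] p'(2) by blast
    moreover have "p \<inter> Y = {}" using partnD(3)[OF pP p'(1) Y] p'(3) by blast
    ultimately have "q \<noteq> X \<union> Y" using pq by blast
    then have "q \<in> P" using q by auto
    then show ?thesis using partnD(3)[OF pP p'(1)] pq by blast
  qed
qed

lemma mrg_iff: "m \<in> mrg P X Y \<longleftrightarrow> m = X \<union> Y \<or> (m \<in> P \<and> m \<noteq> X \<and> m \<noteq> Y)"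
  unfolding mrg_def by auto

lemma sandwich:
  assumes pP: "partn I P" and pQ: "partn I Q" and X: "X \<in> P" and Y: "Y \<in> P" and XY: "X \<noteq> Y"
    and r1: "\<And>p. p \<in> P \<Longrightarrow> \<exists>q\<in>Q. p \<subseteq> q" and r2: "\<And>q. q \<in> Q \<Longrightarrow> \<exists>m\<in>mrg P X Y. q \<subseteq> m"
  shows "Q = P \<or> Q = mrg P X Y"
proof -
  have U: "p \<subseteq> q" if p: "p \<in> P" and q: "q \<in> Q" and pq: "p \<inter> q \<noteq> {}" for p q
  proof -
    obtain q' where q': "q' \<in> Q" "p \<subseteq> q'" using r1[OF p] by blast
    have "q' \<inter> q \<noteq> {}" using q'(2) pq by blast
    then have "q' = q" using partnD(3)[OF pQ q'(1) q] by simp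
    then show ?thesis using q'(2) by simp
  qed
  have pick: "\<exists>p\<in>P. p \<subseteq> q" if q: "q \<in> Q" for q
  proof -
    obtain x where x: "x \<in> q" using partnD(1)[OF pQ q] by blast
    have "x \<in> I" using partnD(2)[OF pQ] q x by blast
    then obtain p where p: "p \<in> P" "x \<in> p" using partnD(2)[OF pP] by blast
    have "p \<inter> q \<noteq> {}" using p(2) x by blast
    then show ?thesis using U[OF p(1) q] p(1) by blast
  qed
  have Xne: "X \<noteq> {}" using partnD(1)[OF pP X] .
  have Yne: "Y \<noteq> {}" using partnD(1)[OF pP Y] .
  have XYd: "X \<inter> Y = {}" using partnD(3)[OF pP X Y] XY by blast
  have PXY: "m \<inter> X = {} \<and> m \<inter> Y = {}" if m: "m \<in> P" "m \<noteq> X" "m \<noteq> Y" for m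
    using partnD(3)[OF pP m(1) X] partnD(3)[OF pP m(1) Y] m(2,3) by blast
  show ?thesis
  proof (cases "\<exists>q0\<in>Q. X \<subseteq> q0 \<and> Y \<subseteq> q0")
    case True
    then obtain q0 where q0: "q0 \<in> Q" "X \<subseteq> q0" "Y \<subseteq> q0" by blast
    have q0e: "q0 = X \<union> Y"
    proof -
      obtain m where m: "m \<in> mrg P X Y" "q0 \<subseteq> m" using r2[OF q0(1)] by blast
      have "m = X \<union> Y"
      proof (rule ccontr)
        assume "m \<noteq> X \<union> Y"
        then have "m \<in> P" "m \<noteq> X" "m \<noteq> Y" using m(1) unfolding mrg_iff by auto
        then have "m \<inter> X = {}" using PXY by blast
        then show False using m(2) q0(2) Xne by blast
      qed
      then show ?thesis using m(2) q0(2,3) by blast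
    qed
    have "Q = mrg P X Y"
    proof
      show "Q \<subseteq> mrg P X Y"
      proof
        fix q assume q: "q \<in> Q"
        show "q \<in> mrg P X Y"
        proof (cases "q = q0")
          case True then show ?thesis using q0e unfolding mrg_iff by simp
        next
          case False
          then have qd: "q \<inter> q0 = {}" using partnD(3)[OF pQ q q0(1)] by blast
          obtain p where p: "p \<in> P" "p \<subseteq> q" using pick[OF q] by blast
          have pne: "p \<noteq> {}" using partnD(1)[OF pP p(1)] .
          obtain m where m: "m \<in> mrg P X Y" "q \<subseteq> m" using r2[OF q] by blast
          have "m \<noteq> X \<union> Y" using m(2) qd q0e p(2) pne by blast
          then have mP: "m \<in> P" "m \<noteq> X" "m \<noteq> Y" using m(1) unfolding mrg_iff by auto
          have "p \<inter> m \<noteq> {}" using p(2) m(2) pne by blast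
          then have "p = m" using partnD(3)[OF pP p(1) mP(1)] by simp
          then have "q = m" using p(2) m(2) by blast
          then show ?thesis using m(1) by simp
        qed
      qed
      show "mrg P X Y \<subseteq> Q"
      proof
        fix m assume m: "m \<in> mrg P X Y"
        show "m \<in> Q"
        proof (cases "m = X \<union> Y")
          case True then show ?thesis using q0e q0(1) by simp
        next
          case False
          then have mP: "m \<in> P" "m \<noteq> X" "m \<noteq> Y" using m unfolding mrg_iff by auto
          obtain q where q: "q \<in> Q" "m \<subseteq> q" using r1[OF mP(1)] by blast
          obtain m' where m': "m' \<in> mrg P X Y" "q \<subseteq> m'" using r2[OF q(1)] by blast
          have mne: "m \<noteq> {}" using partnD(1)[OF pP mP(1)] .
          have dm: "m \<inter> X = {} \<and> m \<inter> Y = {}" using PXY[OF mP] .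
          have "m' \<noteq> X \<union> Y" using dm q(2) m'(2) mne by blast
          then have m'P: "m' \<in> P" using m'(1) unfolding mrg_iff by auto
          have "m \<inter> m' \<noteq> {}" using q(2) m'(2) mne by blast
          then have "m = m'" using partnD(3)[OF pP mP(1) m'P] by simp
          then have "q = m" using q(2) m'(2) by blast
          then show ?thesis using q(1) by simp
        qed
      qed
    qed
    then show ?thesis by simp
  next
    case False
    have QP: "Q \<subseteq> P"
    proof
      fix q assume q: "q \<in> Q"
      obtain p where p: "p \<in> P" "p \<subseteq> q" using pick[OF q] by blast
      have pne: "p \<noteq> {}" using partnD(1)[OF pP p(1)] .
      obtain m where m: "m \<in> mrg P X Y" "q \<subseteq> m" using r2[OF q] by blast
      show "q \<in> P"
      proof (cases "m = X \<union> Y")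
        case False
        then have mP: "m \<in> P" using m(1) unfolding mrg_iff by auto
        have "p \<inter> m \<noteq> {}" using p(2) m(2) pne by blast
        then have "p = m" using partnD(3)[OF pP p(1) mP] by simp
        then have "q = m" using p(2) m(2) by blast
        then show ?thesis using mP by simp
      next
        case True
        have "p \<inter> X \<noteq> {} \<or> p \<inter> Y \<noteq> {}" using p(2) m(2) True pne by blast
        then have pXY: "p = X \<or> p = Y" using partnD(3)[OF pP p(1) X] partnD(3)[OF pP p(1) Y] by blast
        then show ?thesis
        proof
          assume pX: "p = X"
          have "q \<inter> Y = {}"
          proof (rule ccontr)
            assume "q \<inter> Y \<noteq> {}"
            then have "Y \<subseteq> q" using U[OF Y q] by blast
            then show False using False q p(2) pX by blast
          qed
          then have "q = X" using m(2) True p(2) pX by blast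
          then show ?thesis using X by simp
        next
          assume pY: "p = Y"
          have "q \<inter> X = {}"
          proof (rule ccontr)
            assume "q \<inter> X \<noteq> {}"
            then have "X \<subseteq> q" using U[OF X q] by blast
            then show False using False q p(2) pY by blast
          qed
          then have "q = Y" using m(2) True p(2) pY by blast
          then show ?thesis using Y by simp
        qed
      qed
    qed
    have "P \<subseteq> Q"
    proof
      fix p assume p: "p \<in> P"
      obtain q where q: "q \<in> Q" "p \<subseteq> q" using r1[OF p] by blast
      have "q \<in> P" using QP q(1) by blast
      moreover have "p \<inter> q \<noteq> {}" using q(2) partnD(1)[OF pP p] by blast
      ultimately have "p = q" using partnD(3)[OF pP p] by blast
      then show "p \<in> Q" using q(1) by simp
    qed
    then show ?thesis using QP by blast
  qed
qed

lemma split_inner: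
  assumes fF: "forest I F" and fA: "forest I A" and mF: "forest_map I F A (lca A)"
    and u: "u \<in> A" and c: "u1 \<in> A" "u2 \<in> A" "children u u1 u2"
    and R: "R \<in> F" and s1: "u \<inter> R \<inter> u1 \<noteq> {}" and s2: "u \<inter> R \<inter> u2 \<noteq> {}"
  shows "u \<inter> R \<in> inner F \<and> lca A (u \<inter> R) = u"
proof -
  have ne: "u \<inter> R \<noteq> {}" using s1 by blast
  have inF: "u \<inter> R \<in> F" using K_lemma[OF fF fA mF R u] ne by blast
  have l: "lca A (u \<inter> R) = u" using lca_split[OF fA u c(3) c(1) c(2)] s1 s2 by blast
  obtain a where a: "a \<in> u \<inter> R" "a \<in> u1" using s1 by blast
  obtain b where b: "b \<in> u \<inter> R" "b \<in> u2" using s2 by blast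
  have "a \<noteq> b" using a(2) b(2) c(3) unfolding children_def by blast
  then have "card (u \<inter> R) \<ge> 2" using card2_inner[OF forest_fin[OF fF inF] a(1) b(1)] by simp
  then show ?thesis using inF l unfolding inner_def by simp
qed

lemma merge_cases:
  assumes fF: "forest I F" and fA: "forest I A" and mF: "forest_map I F A (lca A)"
    and ch: "children v v1 v2" and v1A: "v1 \<in> A" and v2A: "v2 \<in> A" and vA: "v \<in> A"
    and RA: "RA \<in> F" and RB: "RB \<in> F" and dAB: "RA \<inter> RB = {}"
    and s1: "v1 \<subseteq> RA" and s2: "v2 \<subseteq> RB"
    and u: "u \<in> A" and lu: "lca A (u \<inter> (RA \<union> RB)) = u" and c2: "card (u \<inter> (RA \<union> RB)) \<ge> 2"
  shows "u = v \<or> (u \<inter> RA \<in> inner F \<and> lca A (u \<inter> RA) = u) \<or> (u \<inter> RB \<in> inner F \<and> lca A (u \<inter> RB) = u)"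
proof -
  have "card (u \<inter> (RA \<union> RB)) \<le> card u" using card_le_sub[OF fA u] by blast
  then obtain u1 u2 where c: "u1 \<in> A" "u2 \<in> A" "children u u1 u2" using forestD(6)[OF fA u] c2 by force
  have sp: "(u \<inter> (RA \<union> RB)) \<inter> u1 \<noteq> {} \<and> (u \<inter> (RA \<union> RB)) \<inter> u2 \<noteq> {}"
    using lca_split_conv[OF c(3) c(1) c(2) lu] .
  have v1ne: "v1 \<noteq> {}" and v2ne: "v2 \<noteq> {}" and vU: "v = v1 \<union> v2" using ch unfolding children_def by auto
  have u12: "u1 \<inter> u2 = {}" using c(3) unfolding children_def by blast
  show ?thesis
  proof (cases "u \<inter> RA \<inter> u1 \<noteq> {} \<and> u \<inter> RA \<inter> u2 \<noteq> {}")
    case True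
    then show ?thesis using split_inner[OF fF fA mF u c RA] by blast
  next
    case nA: False
    show ?thesis
    proof (cases "u \<inter> RB \<inter> u1 \<noteq> {} \<and> u \<inter> RB \<inter> u2 \<noteq> {}")
      case True
      then show ?thesis using split_inner[OF fF fA mF u c RB] by blast
    next
      case nB: False
      have o: "(u \<inter> RA \<inter> u2 = {} \<and> u \<inter> RB \<inter> u1 = {} \<and> u \<inter> RA \<noteq> {} \<and> u \<inter> RB \<noteq> {}) \<or>
               (u \<inter> RA \<inter> u1 = {} \<and> u \<inter> RB \<inter> u2 = {} \<and> u \<inter> RA \<noteq> {} \<and> u \<inter> RB \<noteq> {})"
        using sp nA nB by blast
      have uA: "u \<inter> RA \<noteq> {}" and uB: "u \<inter> RB \<noteq> {}" using o by blast+
      have "u = v"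
      proof (rule ccontr)
        assume uv: "u \<noteq> v"
        have lam: "u \<subseteq> v \<or> v \<subseteq> u \<or> u \<inter> v = {}" using forestD(5)[OF fA u vA] .
        show False
        proof (cases "v \<subseteq> u")
          case True
          then have "v \<subseteq> u1 \<or> v \<subseteq> u2" using child_sub[OF fA c(3) c(1) c(2) vA] uv by blast
          then show False using o vU s1 s2 True v1ne v2ne by blast
        next
          case nvu: False
          show False
          proof (cases "u \<subseteq> v")
            case True
            then have "u \<subseteq> v1 \<or> u \<subseteq> v2" using child_sub[OF fA ch v1A v2A u] uv by blast
            then show False using s1 s2 dAB uA uB by blast
          next
            case False
            then have uvd: "u \<inter> v = {}" using lam nvu by blast
            have DA: "lca A RA \<in> A" using forest_mapD(1)[OF mF RA] .
            have RAD: "RA \<subseteq> lca A RA" by (rule lca_upper)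
            have l1: "lca A RA \<subseteq> v \<or> v \<subseteq> lca A RA \<or> lca A RA \<inter> v = {}" using forestD(5)[OF fA DA vA] .
            have l2: "lca A RA \<subseteq> u \<or> u \<subseteq> lca A RA \<or> lca A RA \<inter> u = {}" using forestD(5)[OF fA DA u] .
            have vD: "v \<subseteq> lca A RA" using l1 RAD s1 v1ne uA uvd vU by blast
            have uD: "u \<subseteq> lca A RA" using l2 RAD uA vD uvd vU v1ne by blast
            have une: "u \<noteq> {}" using uA by blast
            have uvD: "u \<union> v \<subseteq> lca A RA" using uD vD by blast
            have zA: "lca A (u \<union> v) \<in> A" using lca_in[OF fA _ DA uvD] une by blast
            have uz: "u \<subseteq> lca A (u \<union> v)" and vz: "v \<subseteq> lca A (u \<union> v)" using lca_upper[of "u \<union> v" A] by blast+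
            obtain a where a: "a \<in> u" using une by blast
            obtain b where b: "b \<in> v" using v1ne vU by blast
            have "a \<noteq> b" using a b uvd by blast
            then have "card (lca A (u \<union> v)) \<ge> 2"
              using card2_inner[OF forest_fin[OF fA zA]] a b uz vz by blast
            then obtain z1 z2 where zc: "z1 \<in> A" "z2 \<in> A" "children (lca A (u \<union> v)) z1 z2"
              using forestD(6)[OF fA zA] by blast
            have "u \<noteq> lca A (u \<union> v)" using vz uvd b by blast
            then have uzz: "u \<subseteq> z1 \<or> u \<subseteq> z2" using child_sub[OF fA zc(3) zc(1) zc(2) u uz] by blast
            have "v \<noteq> lca A (u \<union> v)" using uz uvd a by blast
            then have vzz: "v \<subseteq> z1 \<or> v \<subseteq> z2" using child_sub[OF fA zc(3) zc(1) zc(2) vA vz] by blast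
            have zp: "z1 \<subset> lca A (u \<union> v)" "z2 \<subset> lca A (u \<union> v)" using child_proper[OF zc(3)] by auto
            have n1: "\<not> (u \<subseteq> z1 \<and> v \<subseteq> z1)"
            proof
              assume "u \<subseteq> z1 \<and> v \<subseteq> z1"
              then have "lca A (u \<union> v) \<subseteq> z1" using lca_lower[OF zc(1)] by blast
              then show False using zp by blast
            qed
            have n2: "\<not> (u \<subseteq> z2 \<and> v \<subseteq> z2)"
            proof
              assume "u \<subseteq> z2 \<and> v \<subseteq> z2"
              then have "lca A (u \<union> v) \<subseteq> z2" using lca_lower[OF zc(2)] by blast
              then show False using zp by blast
            qed
            let ?z = "lca A (u \<union> v)"
            have sA1: "?z \<inter> RA \<inter> z1 \<noteq> {}" and sA2: "?z \<inter> RA \<inter> z2 \<noteq> {}"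
              using uzz vzz n1 n2 uA s1 v1ne vU uz vz by blast+
            have sB1: "?z \<inter> RB \<inter> z1 \<noteq> {}" and sB2: "?z \<inter> RB \<inter> z2 \<noteq> {}"
              using uzz vzz n1 n2 uB s2 v2ne vU uz vz by blast+
            have iA: "?z \<inter> RA \<in> inner F \<and> lca A (?z \<inter> RA) = ?z" using split_inner[OF fF fA mF zA zc RA sA1 sA2] .
            have iB: "?z \<inter> RB \<in> inner F \<and> lca A (?z \<inter> RB) = ?z" using split_inner[OF fF fA mF zA zc RB sB1 sB2] .
            have "?z \<inter> RA = ?z \<inter> RB" using forest_mapD(4)[OF mF] iA iB unfolding inj_on_def by metis
            then show False using dAB sA1 by blast
          qed
        qed
      qed
      then show ?thesis by simp
    qed
  qed
qed

lemma construct: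
  assumes fF: "forest I F" and fA: "forest I A" and mF: "forest_map I F A (lca A)"
    and ch: "children v v1 v2" and v1A: "v1 \<in> A" and v2A: "v2 \<in> A" and vA: "v \<in> A"
    and nv: "v \<notin> lca A ` inner F"
    and RA: "RA \<in> roots F" and RB: "RB \<in> roots F" and s1: "v1 \<subseteq> RA" and s2: "v2 \<subseteq> RB"
  shows "RA \<noteq> RB" "forest I (Phi A (mrg (roots F) RA RB))"
    "forest_map I (Phi A (mrg (roots F) RA RB)) A (lca A)"
    "lca A ` inner (Phi A (mrg (roots F) RA RB)) = insert v (lca A ` inner F)"
    "roots (Phi A (mrg (roots F) RA RB)) = mrg (roots F) RA RB"
    "forest_map I F (Phi A (mrg (roots F) RA RB)) (lca (Phi A (mrg (roots F) RA RB)))"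
proof -
  have v1ne: "v1 \<noteq> {}" and v2ne: "v2 \<noteq> {}" and vU: "v = v1 \<union> v2" and v12: "v1 \<inter> v2 = {}"
    using ch unfolding children_def by auto
  obtain a where a: "a \<in> v1" using v1ne by blast
  obtain b where b: "b \<in> v2" using v2ne by blast
  have "a \<noteq> b" using a b v12 by blast
  then have cv: "card v \<ge> 2" using card2_inner[OF forest_fin[OF fA vA]] a b vU by blast
  have vinner: "v \<in> inner A" using vA cv unfolding inner_def by simp
  have lv: "lca A v = v" using lca_self[OF vA] .
  have RAF: "RA \<in> F" and RBF: "RB \<in> F" using roots_in RA RB by metis+
  show nAB: "RA \<noteq> RB"
  proof
    assume e: "RA = RB"
    have "v \<inter> RA \<noteq> {}" using s1 v1ne vU by blast
    then have "v \<inter> RA \<in> F" using K_lemma[OF fF fA mF RAF vA] by blast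
    moreover have "v \<inter> RA = v" using s1 s2 e vU by blast
    ultimately have "v \<in> inner F" using cv unfolding inner_def by simp
    then show False using nv lv by force
  qed
  have dAB: "RA \<inter> RB = {}" using roots_disj[OF fF RA RB] nAB by blast
  have pP: "partn I (roots F)" using roots_partn[OF fF] .
  define Q where "Q = mrg (roots F) RA RB"
  have pQ: "partn I Q" unfolding Q_def using mrg_partn[OF pP RA RB nAB] .
  have ABQ: "RA \<union> RB \<in> Q" unfolding Q_def mrg_def by simp
  define H where "H = Phi A Q"
  have fH: "forest I H" unfolding H_def using Phi_forest[OF fA pQ] .
  have qF: "q \<in> F" if "q \<in> Q" "q \<noteq> RA \<union> RB" for q
    using that roots_in unfolding Q_def mrg_iff by blast
  have cls: "lca A X \<in> A \<and> X = lca A X \<inter> q \<and>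
      ((\<exists>Y. Y \<in> inner F \<and> lca A Y = lca A X \<and> Y \<subseteq> q) \<or> (lca A X = v \<and> q = RA \<union> RB))"
    if X: "X \<in> inner H" and q: "q \<in> Q" and Xq: "X \<subseteq> q" for X q
  proof -
    have XH: "X \<in> H" and cX: "card X \<ge> 2" using X unfolding inner_def by auto
    have XP: "X \<in> Phi A Q" using XH unfolding H_def .
    obtain w where w: "w \<in> A" "X \<subseteq> w" using Phi_cov[OF XP] by blast
    have uA: "lca A X \<in> A" using lca_in[OF fA Phi_ne[OF XP] w] .
    have e: "lca A X \<inter> q = X" using Phi_lca[OF pQ XP q Xq] .
    show ?thesis
    proof (cases "q = RA \<union> RB")
      case False
      have qF': "q \<in> F" using qF[OF q False] .
      have "lca A X \<inter> q \<in> F" using K_lemma[OF fF fA mF qF' uA] e Phi_ne[OF XP] by simp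
      then have "X \<in> inner F" using e cX unfolding inner_def by simp
      then show ?thesis using uA e Xq by blast
    next
      case True
      have lu: "lca A (lca A X \<inter> (RA \<union> RB)) = lca A X" using e True by simp
      have c2: "card (lca A X \<inter> (RA \<union> RB)) \<ge> 2" using e True cX by simp
      have mc: "lca A X = v \<or> (lca A X \<inter> RA \<in> inner F \<and> lca A (lca A X \<inter> RA) = lca A X)
          \<or> (lca A X \<inter> RB \<in> inner F \<and> lca A (lca A X \<inter> RB) = lca A X)"
        using merge_cases[OF fF fA mF ch v1A v2A vA RAF RBF dAB s1 s2 uA lu c2] .
      have "lca A X \<inter> RA \<subseteq> q" "lca A X \<inter> RB \<subseteq> q" using True by blast+
      then show ?thesis using mc uA e True by blast
    qed
  qed
  have blk: "\<exists>q\<in>Q. X \<subseteq> q" if "X \<in> H" for X using Phi_block that unfolding H_def by blast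
  have inj: "inj_on (lca A) (inner H)"
  proof (rule inj_onI)
    fix X X' assume X: "X \<in> inner H" and X': "X' \<in> inner H" and eq: "lca A X = lca A X'"
    obtain q where q: "q \<in> Q" "X \<subseteq> q" using blk X unfolding inner_def by blast
    obtain q' where q': "q' \<in> Q" "X' \<subseteq> q'" using blk X' unfolding inner_def by blast
    have c: "lca A X \<in> A \<and> X = lca A X \<inter> q \<and>
      ((\<exists>Y. Y \<in> inner F \<and> lca A Y = lca A X \<and> Y \<subseteq> q) \<or> (lca A X = v \<and> q = RA \<union> RB))"
      using cls[OF X q] .
    have c': "lca A X' \<in> A \<and> X' = lca A X' \<inter> q' \<and>
      ((\<exists>Y. Y \<in> inner F \<and> lca A Y = lca A X' \<and> Y \<subseteq> q') \<or> (lca A X' = v \<and> q' = RA \<union> RB))"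
      using cls[OF X' q'] .
    show "X = X'"
    proof (cases "q = q'")
      case True then show ?thesis using c c' eq by metis
    next
      case False
      then have dq: "q \<inter> q' = {}" using partnD(3)[OF pQ q(1) q'(1)] by blast
      have nvF: "\<not> (\<exists>Y. Y \<in> inner F \<and> lca A Y = v)" using nv by blast
      have injF: "\<And>Y Y'. Y \<in> inner F \<Longrightarrow> Y' \<in> inner F \<Longrightarrow> lca A Y = lca A Y' \<Longrightarrow> Y = Y'"
        using forest_mapD(4)[OF mF] unfolding inj_on_def by blast
      have Yne: "\<And>Y. Y \<in> inner F \<Longrightarrow> Y \<noteq> {}" using forestD(2)[OF fF] unfolding inner_def by blast
      show ?thesis
      proof -
        have "False"
        proof (cases "lca A X = v \<and> q = RA \<union> RB")
          case True
          then have "\<not> (lca A X' = v \<and> q' = RA \<union> RB)" using False by blast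
          then obtain Y' where "Y' \<in> inner F" "lca A Y' = lca A X'" using c' by blast
          then show False using nvF True eq by metis
        next
          case nc: False
          then obtain Y where Y: "Y \<in> inner F" "lca A Y = lca A X" "Y \<subseteq> q" using c by blast
          show False
          proof (cases "lca A X' = v \<and> q' = RA \<union> RB")
            case True then show False using nvF Y eq by metis
          next
            case False
            then obtain Y' where Y': "Y' \<in> inner F" "lca A Y' = lca A X'" "Y' \<subseteq> q'" using c' by blast
            have "Y = Y'" using injF[OF Y(1) Y'(1)] Y(2) Y'(2) eq by simp
            then show False using Y(3) Y'(3) dq Yne[OF Y(1)] by blast
          qed
        qed
        then show ?thesis by simp
      qed
    qed
  qed
  have mH: "forest_map I H A (lca A)" unfolding H_def using Phi_map[OF fA pQ] inj unfolding H_def by simp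
  have img: "lca A ` inner H = insert v (lca A ` inner F)"
  proof
    show "lca A ` inner H \<subseteq> insert v (lca A ` inner F)"
    proof
      fix u assume "u \<in> lca A ` inner H"
      then obtain X where X: "X \<in> inner H" "u = lca A X" by blast
      obtain q where q: "q \<in> Q" "X \<subseteq> q" using blk X(1) unfolding inner_def by blast
      have "(\<exists>Y. Y \<in> inner F \<and> lca A Y = lca A X \<and> Y \<subseteq> q) \<or> (lca A X = v \<and> q = RA \<union> RB)"
        using cls[OF X(1) q] by blast
      then show "u \<in> insert v (lca A ` inner F)"
      proof
        assume "\<exists>Y. Y \<in> inner F \<and> lca A Y = lca A X \<and> Y \<subseteq> q"
        then obtain Y where "Y \<in> inner F" "lca A Y = u" using X(2) by blast
        then show ?thesis by blast
      next
        assume "lca A X = v \<and> q = RA \<union> RB"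
        then show ?thesis using X(2) by simp
      qed
    qed
    show "insert v (lca A ` inner F) \<subseteq> lca A ` inner H"
    proof
      fix u assume u: "u \<in> insert v (lca A ` inner F)"
      show "u \<in> lca A ` inner H"
      proof (cases "u = v")
        case True
        have "v \<inter> (RA \<union> RB) = v" using vU s1 s2 by blast
        then have "v \<in> H" using PhiI[OF vA ABQ] v1ne vU unfolding H_def by force
        then have "v \<in> inner H" using cv unfolding inner_def by simp
        then show ?thesis using True lv by force
      next
        case False
        then obtain C where C: "C \<in> inner F" "u = lca A C" using u by blast
        have CF: "C \<in> F" and cC: "card C \<ge> 2" using C(1) unfolding inner_def by auto
        obtain R where R: "R \<in> roots F" "C \<subseteq> R" using roots_exist[OF fF CF] by blast
        obtain q where q: "q \<in> Q" "R \<subseteq> q"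
        proof (cases "R = RA \<or> R = RB")
          case True then show ?thesis using that[OF ABQ] by blast
        next
          case False then have "R \<in> Q" using R(1) unfolding Q_def mrg_iff by blast
          then show ?thesis using that by blast
        qed
        have aA: "lca A C \<in> A" using forest_mapD(1)[OF mF CF] .
        have CZ: "C \<subseteq> lca A C \<inter> q" using lca_upper[of C A] R(2) q(2) by blast
        have Cne: "C \<noteq> {}" using forestD(2)[OF fF CF] .
        have ZH: "lca A C \<inter> q \<in> H" using PhiI[OF aA q(1)] CZ Cne unfolding H_def by blast
        have "card C \<le> card (lca A C \<inter> q)" using card_le_sub[OF fH ZH CZ] .
        then have Zi: "lca A C \<inter> q \<in> inner H" using ZH cC unfolding inner_def by simp
        have "lca A (lca A C \<inter> q) \<subseteq> lca A C" using lca_lower[OF aA] by blast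
        moreover have "lca A C \<subseteq> lca A (lca A C \<inter> q)" using lca_mono[OF CZ] .
        ultimately have "lca A (lca A C \<inter> q) = u" using C(2) by blast
        then show ?thesis using Zi by force
      qed
    qed
  qed
  have qc: "\<exists>D\<in>A. q \<subseteq> D" if q: "q \<in> Q" for q
  proof (cases "q = RA \<union> RB")
    case False
    have "q \<in> F" using qF[OF q False] .
    then show ?thesis using forest_mapD(1)[OF mF] lca_upper[of q A] by blast
  next
    case True
    have DA: "lca A RA \<in> A" using forest_mapD(1)[OF mF RAF] .
    have DB: "lca A RB \<in> A" using forest_mapD(1)[OF mF RBF] .
    have uA: "RA \<subseteq> lca A RA" and uB: "RB \<subseteq> lca A RB" by (rule lca_upper)+
    have l1: "lca A RA \<subseteq> v \<or> v \<subseteq> lca A RA \<or> lca A RA \<inter> v = {}" using forestD(5)[OF fA DA vA] .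
    have l2: "lca A RB \<subseteq> v \<or> v \<subseteq> lca A RB \<or> lca A RB \<inter> v = {}" using forestD(5)[OF fA DB vA] .
    have l3: "lca A RA \<subseteq> lca A RB \<or> lca A RB \<subseteq> lca A RA \<or> lca A RA \<inter> lca A RB = {}" using forestD(5)[OF fA DA DB] .
    have i1: "lca A RA \<inter> v \<noteq> {}" using uA s1 v1ne vU by blast
    have i2: "lca A RB \<inter> v \<noteq> {}" using uB s2 v2ne vU by blast
    have "RA \<union> RB \<subseteq> v \<or> RA \<union> RB \<subseteq> lca A RA \<or> RA \<union> RB \<subseteq> lca A RB"
      using l1 l2 l3 i1 i2 uA uB by blast
    then show ?thesis using True vA DA DB by blast
  qed
  have rH: "roots H = Q" unfolding H_def using Phi_roots[OF pQ qc] .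
  have cov: "\<exists>D\<in>H. C \<subseteq> D" if C: "C \<in> F" for C
  proof -
    obtain R where R: "R \<in> roots F" "C \<subseteq> R" using roots_exist[OF fF C] by blast
    obtain q where q: "q \<in> Q" "R \<subseteq> q"
    proof (cases "R = RA \<or> R = RB")
      case True then show ?thesis using that[OF ABQ] by blast
    next
      case False then have "R \<in> Q" using R(1) unfolding Q_def mrg_iff by blast
      then show ?thesis using that by blast
    qed
    have "q \<in> H" using q(1) rH roots_in by metis
    then show ?thesis using R(2) q(2) by blast
  qed
  have mFH: "forest_map I F H (lca H)" using refine_map[OF fF fH fA mF mH cov] .
  show "forest I (Phi A (mrg (roots F) RA RB))" using fH unfolding H_def Q_def .
  show "forest_map I (Phi A (mrg (roots F) RA RB)) A (lca A)" using mH unfolding H_def Q_def .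
  show "lca A ` inner (Phi A (mrg (roots F) RA RB)) = insert v (lca A ` inner F)" using img unfolding H_def Q_def .
  show "roots (Phi A (mrg (roots F) RA RB)) = mrg (roots F) RA RB" using rH unfolding H_def Q_def .
  show "forest_map I F (Phi A (mrg (roots F) RA RB)) (lca (Phi A (mrg (roots F) RA RB)))" using mFH unfolding H_def Q_def .
qed

lemma bot_map:
  assumes fB: "forest I (bot_forest I)" and fA: "forest I A"
  shows "forest_map I (bot_forest I) A (lca A)"
proof (rule fmap_lcaI[OF fB fA])
  show "\<And>C. C \<in> bot_forest I \<Longrightarrow> \<exists>D\<in>A. C \<subseteq> D"
    unfolding bot_forest_def using forestD(4)[OF fA] by blast
  have "inner (bot_forest I) = {}" unfolding inner_def bot_forest_def by auto
  then show "inj_on (lca A) (inner (bot_forest I))" by simp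
  fix C C1 C2 assume a: "C \<in> bot_forest I" "C1 \<in> bot_forest I" "C2 \<in> bot_forest I" "children C C1 C2"
  obtain i where i: "C = {i}" using a(1) unfolding bot_forest_def by auto
  have c: "C1 \<noteq> {}" "C2 \<noteq> {}" "C1 \<inter> C2 = {}" "C1 \<union> C2 = C" using a(4) unfolding children_def by auto
  have "C1 = {i}" using c(1) c(4) i by auto
  moreover have "C2 = {i}" using c(2) c(4) i by auto
  ultimately have False using c(3) by simp
  then show "lca A C1 \<noteq> lca A C \<and> lca A C2 \<noteq> lca A C" by simp
qed

lemma edge_label_eq:
  assumes "x \<notin> vT I T F" "vT I T G = insert x (vT I T F)"
  shows "edge_label I T F G = x"
  unfolding edge_label_def
proof (rule the_equality)
  show "x \<notin> vT I T F \<and> vT I T G = insert x (vT I T F)" using assms by simp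
  fix y assume "y \<notin> vT I T F \<and> vT I T G = insert y (vT I T F)"
  then show "y = x" using assms by blast
qed

lemma lca_img_self: "lca G ` inner G = inner G"
proof -
  have "\<And>C. C \<in> inner G \<Longrightarrow> lca G C = C" using lca_self unfolding inner_def by blast
  then show ?thesis by simp
qed

theorem lemma4p2:
  fixes I :: "'a set" and T F :: "'a set set" and lab :: "'a set \<Rightarrow> nat"
  assumes "finite I" and "tree I T" and "nice_order T lab"
    and "F \<in> interval I T" and "F \<noteq> T"
  shows "\<exists>!G. G \<in> interval I T \<and> covers I F G \<and>
           edge_label I T F G = min_vertex lab (inner T - vT I T F)"
proof -
  have fT: "forest I T" using assms(2) unfolding tree_def by simp
  have leBF: "forest_le I (bot_forest I) F" and leFT: "forest_le I F T"
    using assms(4) unfolding interval_def by auto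
  have fF: "forest I F" using leFT unfolding forest_le_def by simp
  have fB: "forest I (bot_forest I)" using leBF unfolding forest_le_def by simp
  have mF: "forest_map I F T (lca T)" using le_lca(1)[OF leFT] .
  have vF: "vT I T F = lca T ` inner F" using le_lca(2)[OF leFT] .
  have mB: "forest_map I (bot_forest I) T (lca T)" using bot_map[OF fB fT] .
  have injl: "inj_on lab (inner T)" and monl: "\<And>x y. x \<in> inner T \<Longrightarrow> y \<in> inner T \<Longrightarrow> x \<subseteq> y \<Longrightarrow> lab x \<le> lab y"
    using assms(3) unfolding nice_order_def bij_betw_def by auto
  define S where "S = inner T - vT I T F"
  obtain u0 where u0: "u0 \<in> inner T" "u0 \<notin> lca T ` inner F" using nonempty_gap[OF fF fT mF assms(5)] by blast
  have u0S: "u0 \<in> S" using u0 vF unfolding S_def by simp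
  have ex: "\<exists>x. x \<in> S \<and> (\<forall>y. y \<in> S \<longrightarrow> lab x \<le> lab y)"
    using ex_has_least_nat[of "\<lambda>y. y \<in> S" u0 lab] u0S by blast
  then obtain v where vS: "v \<in> S" and vmin: "\<And>y. y \<in> S \<Longrightarrow> lab v \<le> lab y" by blast
  have vinT: "v \<in> inner T" and vnot: "v \<notin> lca T ` inner F" using vS vF unfolding S_def by auto
  have minv: "min_vertex lab S = v"
    unfolding min_vertex_def
  proof (rule the_equality)
    show "v \<in> S \<and> (\<forall>w\<in>S. lab v \<le> lab w)" using vS vmin by blast
    fix y assume y: "y \<in> S \<and> (\<forall>w\<in>S. lab y \<le> lab w)"
    then have "lab y = lab v" using vS vmin by (meson le_antisym)
    moreover have "y \<in> inner T" using y unfolding S_def by blast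
    ultimately show "y = v" using injl vinT unfolding inj_on_def by blast
  qed
  have mn: "\<And>u. u \<in> inner T \<Longrightarrow> u \<subset> v \<Longrightarrow> u \<in> lca T ` inner F"
  proof (rule ccontr)
    fix u assume u: "u \<in> inner T" "u \<subset> v" "u \<notin> lca T ` inner F"
    then have "u \<in> S" using vF unfolding S_def by simp
    then have "lab v \<le> lab u" using vmin by blast
    moreover have "lab u \<le> lab v" using monl[OF u(1) vinT] u(2) by blast
    ultimately have "lab u = lab v" by simp
    then have "u = v" using injl u(1) vinT unfolding inj_on_def by blast
    then show False using u(2) by simp
  qed
  have vT': "v \<in> T" and cv: "card v \<ge> 2" using vinT unfolding inner_def by auto
  obtain v1 v2 where vc: "v1 \<in> T" "v2 \<in> T" "children v v1 v2" using forestD(6)[OF fT vT' cv] by blast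
  have vp: "v1 \<subset> v" "v2 \<subset> v" using child_proper[OF vc(3)] by auto
  have v1F: "v1 \<in> F" using below_in[OF fF fT mF mn vc(1) vp(1)] .
  have v2F: "v2 \<in> F" using below_in[OF fF fT mF mn vc(2) vp(2)] .
  obtain RA where RA: "RA \<in> roots F" "v1 \<subseteq> RA" using roots_exist[OF fF v1F] by blast
  obtain RB where RB: "RB \<in> roots F" "v2 \<subseteq> RB" using roots_exist[OF fF v2F] by blast
  note cs = construct[OF fF fT mF vc(3) vc(1) vc(2) vT' vnot RA(1) RB(1) RA(2) RB(2)]
  define G0 where "G0 = Phi T (mrg (roots F) RA RB)"
  have fG0: "forest I G0" using cs(2) unfolding G0_def .
  have mG0: "forest_map I G0 T (lca T)" using cs(3) unfolding G0_def .
  have img0: "lca T ` inner G0 = insert v (lca T ` inner F)" using cs(4) unfolding G0_def .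
  have rG0: "roots G0 = mrg (roots F) RA RB" using cs(5) unfolding G0_def .
  have mFG0: "forest_map I F G0 (lca G0)" using cs(6) unfolding G0_def .
  have leFG0: "forest_le I F G0" using fF fG0 mFG0 unfolding forest_le_def by blast
  have leG0T: "forest_le I G0 T" using fG0 fT mG0 unfolding forest_le_def by blast
  have mBG0: "forest_map I (bot_forest I) G0 (lca G0)"
  proof (rule refine_map[OF fB fG0 fT mB mG0])
    fix C assume "C \<in> bot_forest I"
    then obtain i where "i \<in> I" "C = {i}" unfolding bot_forest_def by blast
    then show "\<exists>D\<in>G0. C \<subseteq> D" using forestD(4)[OF fG0] by blast
  qed
  have leBG0: "forest_le I (bot_forest I) G0" using fB fG0 mBG0 unfolding forest_le_def by blast
  have G0int: "G0 \<in> interval I T" unfolding interval_def using leBG0 leG0T by blast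
  have vG0: "vT I T G0 = insert v (vT I T F)" using le_lca(2)[OF leG0T] img0 vF by simp
  have el0: "edge_label I T F G0 = v" using edge_label_eq[of v I T F G0] vnot vF vG0 by simp
  have FG0: "F \<noteq> G0"
  proof
    assume e: "F = G0"
    have "v \<in> lca T ` inner G0" using img0 by (simp only: insertI1)
    then have "v \<in> lca T ` inner F" using e by simp
    then show False using vnot by simp
  qed
  have pP: "partn I (roots F)" using roots_partn[OF fF] .
  have nAB: "RA \<noteq> RB" using cs(1) .
  have RAr: "RA \<in> roots F" and RBr: "RB \<in> roots F" using RA RB by auto
  have cov0: "covers I F G0"
    unfolding covers_def
  proof (intro conjI notI)
    show "forest_le I F G0" by (rule leFG0)
    show "F = G0 \<Longrightarrow> False" using FG0 by simp
    assume "\<exists>H. forest_le I F H \<and> forest_le I H G0 \<and> H \<noteq> F \<and> H \<noteq> G0"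
    then obtain H where H: "forest_le I F H" "forest_le I H G0" "H \<noteq> F" "H \<noteq> G0" by blast
    have fH: "forest I H" using H(1) unfolding forest_le_def by simp
    have mFH: "forest_map I F H (lca H)" using le_lca(1)[OF H(1)] .
    have mHG: "forest_map I H G0 (lca G0)" using le_lca(1)[OF H(2)] .
    have pH: "partn I (roots H)" using roots_partn[OF fH] .
    have r1: "\<exists>q\<in>roots H. p \<subseteq> q" if p: "p \<in> roots F" for p
    proof -
      have pF: "p \<in> F" using roots_in p by metis
      have "lca H p \<in> H" using forest_mapD(1)[OF mFH pF] .
      then obtain q where "q \<in> roots H" "lca H p \<subseteq> q" using roots_exist[OF fH] by blast
      then show ?thesis using lca_upper[of p H] by blast
    qed
    have r2: "\<exists>m\<in>mrg (roots F) RA RB. q \<subseteq> m" if q: "q \<in> roots H" for q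
    proof -
      have qH: "q \<in> H" using roots_in q by metis
      have "lca G0 q \<in> G0" using forest_mapD(1)[OF mHG qH] .
      then obtain m where "m \<in> roots G0" "lca G0 q \<subseteq> m" using roots_exist[OF fG0] by blast
      then show ?thesis using lca_upper[of q G0] rG0 by blast
    qed
    have "roots H = roots F \<or> roots H = mrg (roots F) RA RB"
      using sandwich[OF pP pH RAr RBr nAB r1 r2] .
    then show False
    proof
      assume "roots H = roots F"
      then have "F = H" using eq_roots[OF fF fH mFH] by simp
      then show False using H(3) by simp
    next
      assume "roots H = mrg (roots F) RA RB"
      then have "H = G0" using eq_roots[OF fH fG0 mHG] rG0 by simp
      then show False using H(4) by simp
    qed
  qed
  show ?thesis
  proof (rule ex1I[of _ G0])
    show "G0 \<in> interval I T \<and> covers I F G0 \<and> edge_label I T F G0 = min_vertex lab (inner T - vT I T F)"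
      using G0int cov0 el0 minv unfolding S_def by simp
    fix G' assume G': "G' \<in> interval I T \<and> covers I F G' \<and> edge_label I T F G' = min_vertex lab (inner T - vT I T F)"
    have leG'T: "forest_le I G' T" using G' unfolding interval_def by blast
    have cov': "forest_le I F G'" "F \<noteq> G'"
      "\<not> (\<exists>H. forest_le I F H \<and> forest_le I H G' \<and> H \<noteq> F \<and> H \<noteq> G')"
      using G' unfolding covers_def by auto
    have el': "edge_label I T F G' = v" using G' minv unfolding S_def by simp
    have fG': "forest I G'" using leG'T unfolding forest_le_def by simp
    have mG': "forest_map I G' T (lca T)" using le_lca(1)[OF leG'T] .
    have vG': "vT I T G' = lca T ` inner G'" using le_lca(2)[OF leG'T] .
    have mFG': "forest_map I F G' (lca G')" using le_lca(1)[OF cov'(1)] .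
    obtain w0 where w0: "w0 \<in> inner G'" "w0 \<notin> lca G' ` inner F" using nonempty_gap[OF fF fG' mFG' cov'(2)] by blast
    have ex': "\<exists>x. (x \<in> inner G' \<and> x \<notin> lca G' ` inner F) \<and>
        (\<forall>y. y \<in> inner G' \<and> y \<notin> lca G' ` inner F \<longrightarrow> card x \<le> card y)"
      by (rule ex_has_least_nat[of "\<lambda>y. y \<in> inner G' \<and> y \<notin> lca G' ` inner F" w0 card]) (simp add: w0)
    then obtain v' where v': "v' \<in> inner G'" "v' \<notin> lca G' ` inner F"
      and v'min: "\<And>y. y \<in> inner G' \<Longrightarrow> y \<notin> lca G' ` inner F \<Longrightarrow> card v' \<le> card y" by blast
    have v'G: "v' \<in> G'" and cv': "card v' \<ge> 2" using v'(1) unfolding inner_def by auto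
    have mn': "\<And>u. u \<in> inner G' \<Longrightarrow> u \<subset> v' \<Longrightarrow> u \<in> lca G' ` inner F"
    proof (rule ccontr)
      fix u assume u: "u \<in> inner G'" "u \<subset> v'" "u \<notin> lca G' ` inner F"
      have "card u < card v'" using card_lt_sub[OF fG' v'G u(2)] .
      moreover have "card v' \<le> card u" using v'min[OF u(1) u(3)] .
      ultimately show False by simp
    qed
    obtain w1 w2 where wc: "w1 \<in> G'" "w2 \<in> G'" "children v' w1 w2" using forestD(6)[OF fG' v'G cv'] by blast
    have wp: "w1 \<subset> v'" "w2 \<subset> v'" using child_proper[OF wc(3)] by auto
    have w1F: "w1 \<in> F" using below_in[OF fF fG' mFG' mn' wc(1) wp(1)] .
    have w2F: "w2 \<in> F" using below_in[OF fF fG' mFG' mn' wc(2) wp(2)] .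
    obtain R1 where R1: "R1 \<in> roots F" "w1 \<subseteq> R1" using roots_exist[OF fF w1F] by blast
    obtain R2 where R2: "R2 \<in> roots F" "w2 \<subseteq> R2" using roots_exist[OF fF w2F] by blast
    note cs' = construct[OF fF fG' mFG' wc(3) wc(1) wc(2) v'G v'(2) R1(1) R2(1) R1(2) R2(2)]
    define H where "H = Phi G' (mrg (roots F) R1 R2)"
    have fH: "forest I H" using cs'(2) unfolding H_def .
    have mHG': "forest_map I H G' (lca G')" using cs'(3) unfolding H_def .
    have imgH: "lca G' ` inner H = insert v' (lca G' ` inner F)" using cs'(4) unfolding H_def .
    have rH: "roots H = mrg (roots F) R1 R2" using cs'(5) unfolding H_def .
    have mFH: "forest_map I F H (lca H)" using cs'(6) unfolding H_def .
    have "H \<noteq> F"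
    proof
      assume e: "H = F"
      have "v' \<in> lca G' ` inner H" using imgH by (simp only: insertI1)
      then have "v' \<in> lca G' ` inner F" using e by simp
      then show False using v'(2) by simp
    qed
    moreover have "forest_le I F H" using fF fH mFH unfolding forest_le_def by blast
    moreover have "forest_le I H G'" using fH fG' mHG' unfolding forest_le_def by blast
    ultimately have HG: "H = G'" using cov'(3) by blast
    have innG': "inner G' = insert v' (lca G' ` inner F)" using imgH HG lca_img_self[of G'] by simp
    have comp: "lca T (lca G' C) = lca T C" if C: "C \<in> inner F" for C
    proof -
      have CF: "C \<in> F" using C unfolding inner_def by simp
      have "lca G' C \<in> G'" using forest_mapD(1)[OF mFG' CF] .
      then show ?thesis using lca_comp(1)[OF fG' fT mG' forestD(2)[OF fF CF]] lca_upper[of C G'] by blast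
    qed
    have "lca T ` lca G' ` inner F = lca T ` inner F"
      unfolding image_image using comp by simp
    then have vG'': "vT I T G' = insert (lca T v') (vT I T F)" using vG' innG' vF by simp
    have nin: "lca T v' \<notin> vT I T F"
    proof
      assume "lca T v' \<in> vT I T F"
      then obtain C where C: "C \<in> inner F" "lca T v' = lca T C" using vF by blast
      have CF: "C \<in> F" using C(1) unfolding inner_def by simp
      have i1: "lca G' C \<in> inner G'" using forest_mapD(3)[OF mFG' C(1)] .
      have "lca T v' = lca T (lca G' C)" using C(2) comp[OF C(1)] by simp
      then have "v' = lca G' C" using forest_mapD(4)[OF mG'] v'(1) i1 unfolding inj_on_def by blast
      then show False using v'(2) C(1) by blast
    qed
    have "edge_label I T F G' = lca T v'" using edge_label_eq[OF nin vG''] .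
    then have lv': "lca T v' = v" using el' by simp
    have s1: "lca T w1 \<subset> lca T v'" using forest_mapD(6)[OF mG' v'G wc(1) wc(2) wc(3)] .
    have s2: "lca T w2 \<subset> lca T v'" using forest_mapD(7)[OF mG' v'G wc(1) wc(2) wc(3)] .
    have nK: "\<not> (\<exists>K\<in>T. K \<subset> lca T v' \<and> lca T w1 \<union> lca T w2 \<subseteq> K)"
      using forest_mapD(8)[OF mG' v'G wc(1) wc(2) wc(3)] .
    have t1: "lca T w1 \<in> T" using forest_mapD(1)[OF mG' wc(1)] .
    have t2: "lca T w2 \<in> T" using forest_mapD(1)[OF mG' wc(2)] .
    have br: "(lca T w1 \<subseteq> v1 \<and> lca T w2 \<subseteq> v2) \<or> (lca T w1 \<subseteq> v2 \<and> lca T w2 \<subseteq> v1)"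
      using branch[OF fT vc(3) vc(1) vc(2) t1 t2] s1 s2 nK lv' by simp
    have w1ne: "w1 \<noteq> {}" and w2ne: "w2 \<noteq> {}" using wc(3) unfolding children_def by auto
    have u1: "w1 \<subseteq> lca T w1" and u2: "w2 \<subseteq> lca T w2" by (rule lca_upper)+
    have mrg_eq: "mrg (roots F) R1 R2 = mrg (roots F) RA RB"
      using br
    proof
      assume b: "lca T w1 \<subseteq> v1 \<and> lca T w2 \<subseteq> v2"
      have "R1 \<inter> RA \<noteq> {}" using b u1 R1(2) RA(2) w1ne by blast
      then have "R1 = RA" using roots_disj[OF fF R1(1) RA(1)] by simp
      moreover have "R2 \<inter> RB \<noteq> {}" using b u2 R2(2) RB(2) w2ne by blast
      then have "R2 = RB" using roots_disj[OF fF R2(1) RB(1)] by simp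
      ultimately show ?thesis by simp
    next
      assume b: "lca T w1 \<subseteq> v2 \<and> lca T w2 \<subseteq> v1"
      have "R1 \<inter> RB \<noteq> {}" using b u1 R1(2) RB(2) w1ne by blast
      then have "R1 = RB" using roots_disj[OF fF R1(1) RB(1)] by simp
      moreover have "R2 \<inter> RA \<noteq> {}" using b u2 R2(2) RA(2) w2ne by blast
      then have "R2 = RA" using roots_disj[OF fF R2(1) RA(1)] by simp
      ultimately show ?thesis unfolding mrg_def by (simp add: Un_commute insert_commute)
    qed
    have rr: "roots G' = roots G0" using rH HG mrg_eq rG0 by simp
    have "G' \<subseteq> G0" using same_roots[OF fG' fG0 fT mG' mG0 rr] .
    moreover have "G0 \<subseteq> G'" using same_roots[OF fG0 fG' fT mG0 mG' rr[symmetric]] .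
    ultimately show "G' = G0" by blast
  qed
qed

end
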